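(* There exist absolute constants $c_1,c_2,c_3>0$ such that for every integer $n\ge 1$, every real $m\ge n$, and all distributions $p,q$ over $[n]$, with probability at least $9/10$ over the random variables $\widehat f_1,\dots,\widehat f_n$ the following bounds hold simultaneously: \[ c_1\min\Big(\frac{m^{3/2}\|p-q\|_1}{n^{1/2}}, \frac{m^2\|p-q\|_1^2}{n}\Big) \le \mathbb{E}\big[ Z\mid \widehat f_1,\dots,\widehat f_n \big] \le c_2\frac{m^{3/2}\|p-q\|_1}{n^{1/2}}, \qquad \operatorname{Var}\big[ Z \mid \widehat f_1,\dots,\widehat f_n \big] \le c_3\frac{m^2}{n}. \]
   Context: Let $p,q$ be distributions over $[n]$ and $m>0$. Let $\tilde X_i, X_i\sim\mathrm{Poi}(mp_i)$ and $\tilde Y_i,Y_i\sim \mathrm{Poi}(mq_i)$ ($i\in[n]$), all mutually independent (these are the symbol counts in two independent sets of $\mathrm{Poi}(m)$ samples from each of $p$ and $q$). For $m\ge n$ define $f_i=\max\{\sqrt{mn}\,|p_i-q_i|,\ n(p_i+q_i),\ 1\}$ and $\widehat f_i=\max\Big\{\frac{|\tilde X_i-\tilde Y_i|}{\sqrt{m/n}},\ \frac{\tilde X_i+\tilde Y_i}{m/n},\ 1\Big\}$; for $m<n$ define $f_i=\max\{m(p_i+q_i),1\}$ and $\widehat f_i=\max\{\tilde X_i+\tilde Y_i,1\}$. Let $Z_i=(X_i-Y_i)^2-X_i-Y_i$ and $Z=\sum_{i=1}^n Z_i/\widehat f_i$. $\|p-q\|_1=\sum_i|p_i-q_i|$.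 *)

theory Defs
  imports "HOL-Probability.Probability"
begin

definition poi :: "real \<Rightarrow> nat pmf" where
  "poi r = (if r \<le> 0 then return_pmf 0 else poisson_pmf r)"

text \<open>A distribution over [n] = {0..<n}.\<close>
definition is_distr :: "nat \<Rightarrow> (nat \<Rightarrow> real) \<Rightarrow> bool" where
  "is_distr n p \<longleftrightarrow> (\<forall>i<n. 0 \<le> p i) \<and> (\<Sum>i<n. p i) = 1"

definition counts :: "nat \<Rightarrow> real \<Rightarrow> (nat \<Rightarrow> real) \<Rightarrow> (nat \<Rightarrow> nat) pmf" where
  "counts n m p = Pi_pmf {..<n} 0 (\<lambda>i. poi (m * p i))"

text \<open>Estimate fhat_i from the counts a = tilde X_i, b = tilde Y_i.\<close>
definition fhat :: "nat \<Rightarrow> real \<Rightarrow> nat \<Rightarrow> nat \<Rightarrow> real" where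
  "fhat n m a b = (if real n \<le> m
     then max (\<bar>real a - real b\<bar> / sqrt (m / real n)) (max ((real a + real b) / (m / real n)) 1)
     else max (real a + real b) 1)"

definition Zstat :: "nat \<Rightarrow> (nat \<Rightarrow> real) \<Rightarrow> (nat \<Rightarrow> nat) \<Rightarrow> (nat \<Rightarrow> nat) \<Rightarrow> real" where
  "Zstat n fh X Y = (\<Sum>i<n. ((real (X i) - real (Y i))^2 - real (X i) - real (Y i)) / fh i)"

text \<open>Conditional distribution of Z given the weights fh: since (X,Y) is independent
  of (tilde X, tilde Y), it is the law of Zstat with fh held fixed.\<close>
definition Zcond :: "nat \<Rightarrow> real \<Rightarrow> (nat \<Rightarrow> real) \<Rightarrow> (nat \<Rightarrow> real) \<Rightarrow> (nat \<Rightarrow> real) \<Rightarrow> real pmf" where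
  "Zcond n m p q fh = map_pmf (\<lambda>(X, Y). Zstat n fh X Y) (pair_pmf (counts n m p) (counts n m q))"

definition l1dist :: "nat \<Rightarrow> (nat \<Rightarrow> real) \<Rightarrow> (nat \<Rightarrow> real) \<Rightarrow> real" where
  "l1dist n p q = (\<Sum>i<n. \<bar>p i - q i\<bar>)"

end

theory Submission
  imports Defs
begin

lemma pmf_integrable_iff_nat:
  fixes f :: "nat \<Rightarrow> real"
  shows "integrable (measure_pmf p) f \<longleftrightarrow> summable (\<lambda>k. \<bar>pmf p k * f k\<bar>)"
  unfolding measure_pmf_eq_density
  by (subst integrable_density) (auto simp: integrable_count_space_nat_iff)

lemma pmf_integral_nat:
  fixes f :: "nat \<Rightarrow> real"
  assumes "integrable (measure_pmf p) f"
  shows "(\<lambda>k. pmf p k * f k) sums measure_pmf.expectation p f"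
proof -
  have "integrable (count_space UNIV) (\<lambda>k. pmf p k * f k)"
    using assms unfolding pmf_integrable_iff_nat integrable_count_space_nat_iff by simp
  moreover have "measure_pmf.expectation p f = (\<integral>k. pmf p k * f k \<partial>count_space UNIV)"
    unfolding measure_pmf_eq_density by (subst integral_density) auto
  ultimately show ?thesis using sums_integral_count_space_nat by metis
qed

lemma pmf_integral_nat':
  fixes f :: "nat \<Rightarrow> real"
  assumes "(\<lambda>k. pmf p k * f k) sums s" "integrable (measure_pmf p) f"
  shows "measure_pmf.expectation p f = s"
  using pmf_integral_nat[OF assms(2)] assms(1) sums_unique2 by blast

lemma poisson_shift_term:
  assumes r: "r > 0"
  shows "pmf (poisson_pmf r) (Suc k) * (real (Suc k) * g (Suc k)) = r * (pmf (poisson_pmf r) k * g (Suc k))"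
proof -
  have F: "fact k > (0::real)" by simp
  have f: "fact (Suc k) = (real k + 1) * fact k" by (simp add: algebra_simps)
  have k: "real k + 1 > 0" "1 + real k > 0" "real k + 1 \<noteq> 0" by simp_all
  have "pmf (poisson_pmf r) (Suc k) * (real (Suc k) * g (Suc k))
     = (r * r ^ k) / ((real k + 1) * fact k) * exp (-r) * ((real k + 1) * g (Suc k))"
  proof -
    have "pmf (poisson_pmf r) (Suc k) = (r * r ^ k) / ((real k + 1) * fact k) * exp (-r)"
      using r by (simp only: pmf_poisson[OF r] f power_Suc)
    moreover have "real (Suc k) = real k + 1" by simp
    ultimately show ?thesis by (simp only:)
  qed
  also have "\<dots> = r * (r ^ k / fact k * exp (-r) * g (Suc k))"
  proof -
    have gen: "\<And>K F a b c (d::real). K > 0 \<Longrightarrow> F > 0 \<Longrightarrow> (a * b) / (K * F) * c * (K * d) = a * (b / F * c * d)"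
      by (simp add: field_simps)
    show ?thesis by (rule gen) (use F k in auto)
  qed
  finally show ?thesis using r by simp
qed

lemma poisson_shift:
  fixes g :: "nat \<Rightarrow> real"
  assumes r: "r > 0" and int: "integrable (poisson_pmf r) (\<lambda>k. g (Suc k))"
  shows "integrable (poisson_pmf r) (\<lambda>k. real k * g k)"
    and "measure_pmf.expectation (poisson_pmf r) (\<lambda>k. real k * g k)
          = r * measure_pmf.expectation (poisson_pmf r) (\<lambda>k. g (Suc k))"
proof -
  let ?T = "\<lambda>k. pmf (poisson_pmf r) k * (real k * g k)"
  have sh: "?T (Suc k) = r * (pmf (poisson_pmf r) k * g (Suc k))" for k
    using poisson_shift_term[OF r] .
  have s1: "summable (\<lambda>k. \<bar>pmf (poisson_pmf r) k * g (Suc k)\<bar>)"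
    using int unfolding pmf_integrable_iff_nat .
  have "summable (\<lambda>k. \<bar>?T (Suc k)\<bar>)"
    unfolding sh using summable_mult[OF s1, of "\<bar>r\<bar>"] by (simp add: abs_mult)
  hence "summable (\<lambda>k. \<bar>?T k\<bar>)"
    using summable_Suc_iff[of "\<lambda>k. \<bar>?T k\<bar>"] by simp
  thus i: "integrable (poisson_pmf r) (\<lambda>k. real k * g k)"
    unfolding pmf_integrable_iff_nat .
  have "(\<lambda>k. ?T (Suc k)) sums (r * measure_pmf.expectation (poisson_pmf r) (\<lambda>k. g (Suc k)))"
    unfolding sh by (intro sums_mult pmf_integral_nat int)
  hence "?T sums (r * measure_pmf.expectation (poisson_pmf r) (\<lambda>k. g (Suc k)))"
    using sums_Suc_iff[of ?T] by simp
  thus "measure_pmf.expectation (poisson_pmf r) (\<lambda>k. real k * g k)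
          = r * measure_pmf.expectation (poisson_pmf r) (\<lambda>k. g (Suc k))"
    using pmf_integral_nat'[OF _ i] by blast
qed

lemma poisson_integrable_pow:
  assumes r: "r > 0"
  shows "c \<ge> 0 \<Longrightarrow> integrable (poisson_pmf r) (\<lambda>k. (real k + c) ^ j)"
proof (induction j arbitrary: c)
  case 0
  then show ?case by simp
next
  case (Suc j)
  have "integrable (poisson_pmf r) (\<lambda>k. real k * (real k + c) ^ j)"
    by (rule poisson_shift(1)[OF r]) (use Suc.IH[of "c+1"] Suc.prems in \<open>simp add: add_ac\<close>)
  moreover have "integrable (poisson_pmf r) (\<lambda>k. c * (real k + c) ^ j)"
    using Suc by simp
  ultimately have "integrable (poisson_pmf r) (\<lambda>k. real k * (real k + c) ^ j + c * (real k + c) ^ j)"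
    by (rule Bochner_Integration.integrable_add)
  thus ?case by (simp add: algebra_simps)
qed

lemma poi_integrable_pow: "r \<ge> 0 \<Longrightarrow> integrable (poi r) (\<lambda>k. real k ^ j)"
  unfolding poi_def using poisson_integrable_pow[of r 0 j]
  by (auto intro: integrable_measure_pmf_finite)

definition mom :: "real \<Rightarrow> nat \<Rightarrow> real" where
  "mom r j = measure_pmf.expectation (poi r) (\<lambda>k. real k ^ j)"

lemma poi_exp_poly:
  assumes "r \<ge> 0"
  shows "measure_pmf.expectation (poi r) (\<lambda>k. \<Sum>j\<le>d. c j * real k ^ j) = (\<Sum>j\<le>d. c j * mom r j)"
  unfolding mom_def
  by (subst Bochner_Integration.integral_sum) (auto intro!: poi_integrable_pow assms)

lemma poi_integrable_poly:
  assumes "r \<ge> 0"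
  shows "integrable (poi r) (\<lambda>k. \<Sum>j\<le>d. c j * real k ^ j)"
  by (auto intro!: poi_integrable_pow assms)

lemma mom_Suc:
  assumes "r \<ge> 0"
  shows "mom r (Suc j) = r * (\<Sum>i\<le>j. of_nat (j choose i) * mom r i)"
proof (cases "r = 0")
  case True
  then show ?thesis by (simp add: mom_def poi_def)
next
  case False
  hence r: "r > 0" using assms by simp
  have eq: "(real (Suc k)) ^ j = (\<Sum>i\<le>j. of_nat (j choose i) * real k ^ i)" for k
    using binomial_ring[of "real k" 1 j] by (simp add: add.commute)
  have "mom r (Suc j) = measure_pmf.expectation (poisson_pmf r) (\<lambda>k. real k * real k ^ j)"
    using r by (simp add: mom_def poi_def)
  also have "\<dots> = r * measure_pmf.expectation (poisson_pmf r) (\<lambda>k. real (Suc k) ^ j)"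
    using poisson_integrable_pow[OF r, of 1 j] r
    by (intro poisson_shift(2)) (auto simp: add.commute)
  also have "measure_pmf.expectation (poisson_pmf r) (\<lambda>k. real (Suc k) ^ j)
      = measure_pmf.expectation (poi r) (\<lambda>k. \<Sum>i\<le>j. of_nat (j choose i) * real k ^ i)"
    using r by (simp only: eq poi_def) simp
  also have "\<dots> = (\<Sum>i\<le>j. of_nat (j choose i) * mom r i)"
    by (rule poi_exp_poly) (use r in simp)
  finally show ?thesis .
qed

lemma mom_vals:
  assumes "r \<ge> 0"
  shows "mom r 0 = 1" "mom r 1 = r" "mom r 2 = r^2 + r" "mom r 3 = r^3 + 3*r^2 + r"
    "mom r 4 = r^4 + 6*r^3 + 7*r^2 + r"
proof -
  show m0: "mom r 0 = 1" by (simp add: mom_def)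
  have m1: "mom r 1 = r" using mom_Suc[OF assms, of 0] m0 by simp
  show "mom r 1 = r" by (fact m1)
  have m2: "mom r 2 = r^2 + r" using mom_Suc[OF assms, of 1] m0 m1
    by (simp add: numeral_eq_Suc power2_eq_square algebra_simps)
  show "mom r 2 = r^2 + r" by (fact m2)
  have m3: "mom r 3 = r^3 + 3*r^2 + r" using mom_Suc[OF assms, of 2] m0 m1 m2
    by (simp add: numeral_eq_Suc power2_eq_square power3_eq_cube algebra_simps)
  show "mom r 3 = r^3 + 3*r^2 + r" by (fact m3)
  show "mom r 4 = r^4 + 6*r^3 + 7*r^2 + r" using mom_Suc[OF assms, of 3] m0 m1 m2 m3
    by (simp add: numeral_eq_Suc power2_eq_square power3_eq_cube algebra_simps)
qed

lemma Pi_comp_integrable: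
  fixes F :: "'a \<Rightarrow> real" and R :: "'i \<Rightarrow> 'a pmf"
  assumes "finite I" "k \<in> I" "integrable (R k) F"
  shows "integrable (Pi_pmf I d R) (\<lambda>h. F (h k))"
proof -
  have "R k = map_pmf (\<lambda>h. h k) (Pi_pmf I d R)"
    using assms by (subst Pi_pmf_component) auto
  with assms(3) show ?thesis by simp
qed

lemma Pi_comp_expectation:
  fixes F :: "'a \<Rightarrow> real" and R :: "'i \<Rightarrow> 'a pmf"
  assumes "finite I" "k \<in> I"
  shows "measure_pmf.expectation (Pi_pmf I d R) (\<lambda>h. F (h k)) = measure_pmf.expectation (R k) F"
proof -
  have "R k = map_pmf (\<lambda>h. h k) (Pi_pmf I d R)"
    using assms by (subst Pi_pmf_component) auto
  thus ?thesis by simp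
qed

lemma Pi_prod_expectation:
  fixes F :: "'i \<Rightarrow> 'a \<Rightarrow> real" and R :: "'i \<Rightarrow> 'a pmf"
  assumes fin: "finite I" and J: "J \<subseteq> I" and int: "\<And>k. k \<in> J \<Longrightarrow> integrable (R k) (F k)"
  shows "measure_pmf.expectation (Pi_pmf I d R) (\<lambda>h. \<Prod>k\<in>J. F k (h k)) = (\<Prod>k\<in>J. measure_pmf.expectation (R k) (F k))"
    and "integrable (Pi_pmf I d R) (\<lambda>h. \<Prod>k\<in>J. F k (h k))"
proof -

  have ind: "prob_space.indep_vars (measure_pmf (Pi_pmf I d R)) (\<lambda>_. count_space UNIV) (\<lambda>x f. f x) J"
    by (rule prob_space.indep_vars_subset[OF measure_pmf.prob_space_axioms indep_vars_Pi_pmf[OF fin] J])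
  have ind2: "prob_space.indep_vars (measure_pmf (Pi_pmf I d R)) (\<lambda>_. borel) (\<lambda>k h. F k (h k)) J"
    by (rule prob_space.indep_vars_compose2[OF measure_pmf.prob_space_axioms ind]) simp
  have finJ: "finite J" using fin J finite_subset by blast
  have intk: "\<And>k. k \<in> J \<Longrightarrow> integrable (Pi_pmf I d R) (\<lambda>h. F k (h k))"
    using J by (intro Pi_comp_integrable[OF fin] int) auto
  show "integrable (Pi_pmf I d R) (\<lambda>h. \<Prod>k\<in>J. F k (h k))"
    by (rule prob_space.indep_vars_integrable[OF measure_pmf.prob_space_axioms finJ ind2 intk])
  have "measure_pmf.expectation (Pi_pmf I d R) (\<lambda>h. \<Prod>k\<in>J. F k (h k))
     = (\<Prod>k\<in>J. measure_pmf.expectation (Pi_pmf I d R) (\<lambda>h. F k (h k)))"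
    by (rule prob_space.indep_vars_lebesgue_integral[OF measure_pmf.prob_space_axioms finJ ind2 intk])
  also have "\<dots> = (\<Prod>k\<in>J. measure_pmf.expectation (R k) (F k))"
    using J by (intro prod.cong refl Pi_comp_expectation[OF fin]) auto
  finally show "measure_pmf.expectation (Pi_pmf I d R) (\<lambda>h. \<Prod>k\<in>J. F k (h k)) = (\<Prod>k\<in>J. measure_pmf.expectation (R k) (F k))" .
qed

lemma pair_as_Pi:
  "pair_pmf A B = map_pmf (\<lambda>h. (h True, h False)) (Pi_pmf UNIV d (\<lambda>b. if b then A else B))"
proof -
  have U: "(UNIV :: bool set) = insert True {False}" by auto
  have "Pi_pmf UNIV d (\<lambda>b. if b then A else B)
     = map_pmf (\<lambda>(y,f). f(True:=y)) (pair_pmf A (Pi_pmf {False} d (\<lambda>b. if b then A else B)))"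
    unfolding U by (subst Pi_pmf_insert) auto
  also have "Pi_pmf {False} d (\<lambda>b. if b then A else B) = map_pmf (\<lambda>a b. if b = False then a else d) B"
    by (subst Pi_pmf_singleton) simp
  also have "pair_pmf A (map_pmf (\<lambda>a b. if b = False then a else d) B)
     = map_pmf (apsnd (\<lambda>a b. if b = False then a else d)) (pair_pmf A B)"
    by (rule pair_map_pmf2)
  finally have "map_pmf (\<lambda>h. (h True, h False)) (Pi_pmf UNIV d (\<lambda>b. if b then A else B))
     = map_pmf ((\<lambda>h. (h True, h False)) \<circ> (\<lambda>(y,f). f(True:=y)) \<circ> apsnd (\<lambda>a b. if b = False then a else d)) (pair_pmf A B)"
    by (simp only: pmf.map_comp comp_assoc)
  also have "(\<lambda>h. (h True, h False)) \<circ> (\<lambda>(y,f). f(True:=y)) \<circ> apsnd (\<lambda>a b. if b = False then a else d) = id"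
    by (auto simp: fun_eq_iff)
  finally show ?thesis by simp
qed

lemma pair_prod_expectation:
  fixes f g :: "'a \<Rightarrow> real" and A B :: "'a pmf"
  assumes "integrable A f" "integrable B g"
  shows "integrable (pair_pmf A B) (\<lambda>x. f (fst x) * g (snd x))"
    and "measure_pmf.expectation (pair_pmf A B) (\<lambda>x. f (fst x) * g (snd x))
         = measure_pmf.expectation A f * measure_pmf.expectation B g"
proof -
  define R where "R = (\<lambda>b. if b then A else B)"
  define F where "F = (\<lambda>b. if b then f else g)"
  have U: "(UNIV :: bool set) = {True, False}" by auto
  have eq: "(\<lambda>h. \<Prod>b\<in>UNIV. F b (h b)) = (\<lambda>h. f (h True) * g (h False))"
    unfolding U F_def by (auto simp: fun_eq_iff)
  have int: "\<And>b. b \<in> UNIV \<Longrightarrow> integrable (R b) (F b)"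
    using assms unfolding R_def F_def by auto
  have P2: "integrable (Pi_pmf UNIV undefined R) (\<lambda>h. \<Prod>b\<in>UNIV. F b (h b))"
    by (rule Pi_prod_expectation(2)) (use int in auto)
  have P1: "measure_pmf.expectation (Pi_pmf UNIV undefined R) (\<lambda>h. \<Prod>b\<in>UNIV. F b (h b))
     = (\<Prod>b\<in>UNIV. measure_pmf.expectation (R b) (F b))"
    by (rule Pi_prod_expectation(1)) (use int in auto)
  have "integrable (Pi_pmf UNIV undefined R) (\<lambda>h. f (h True) * g (h False))"
    using P2 unfolding eq by simp
  thus "integrable (pair_pmf A B) (\<lambda>x. f (fst x) * g (snd x))"
    unfolding pair_as_Pi[of A B undefined] R_def by simp
  have "measure_pmf.expectation (Pi_pmf UNIV undefined R) (\<lambda>h. f (h True) * g (h False))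
      = (\<Prod>b\<in>UNIV. measure_pmf.expectation (R b) (F b))"
    using P1 unfolding eq by simp
  also have "\<dots> = measure_pmf.expectation A f * measure_pmf.expectation B g"
    unfolding U R_def F_def by simp
  finally show "measure_pmf.expectation (pair_pmf A B) (\<lambda>x. f (fst x) * g (snd x))
         = measure_pmf.expectation A f * measure_pmf.expectation B g"
    unfolding pair_as_Pi[of A B undefined] R_def by simp
qed

definition cmom :: "real \<Rightarrow> nat \<Rightarrow> real" where
  "cmom r i = measure_pmf.expectation (poi r) (\<lambda>k. (real k - r) ^ i)"

lemma cpow_expand: "(real k - r) ^ i = (\<Sum>t\<le>i. (of_nat (i choose t) * (- r) ^ (i - t)) * real k ^ t)"
  using binomial_ring[of "real k" "-r" i] by (simp add: algebra_simps)

lemma poi_integrable_cpow: "r \<ge> 0 \<Longrightarrow> integrable (poi r) (\<lambda>k. (real k - r) ^ i)"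
  unfolding cpow_expand by (rule poi_integrable_poly)

lemma cmom_expand: "r \<ge> 0 \<Longrightarrow> cmom r i = (\<Sum>t\<le>i. (of_nat (i choose t) * (- r) ^ (i - t)) * mom r t)"
  unfolding cmom_def cpow_expand by (rule poi_exp_poly)

lemma cmom_vals:
  assumes "r \<ge> 0"
  shows "cmom r 0 = 1" "cmom r 1 = 0" "cmom r 2 = r" "cmom r 3 = r" "cmom r 4 = r + 3 * r^2"
  using mom_vals[OF assms]
  by (simp_all add: cmom_expand[OF assms] numeral_eq_Suc power2_eq_square power3_eq_cube algebra_simps)

abbreviation PP :: "real \<Rightarrow> real \<Rightarrow> (nat \<times> nat) pmf" where
  "PP l u \<equiv> pair_pmf (poi l) (poi u)"

lemma PP_mono:
  assumes "l \<ge> 0" "u \<ge> 0"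
  shows "integrable (PP l u) (\<lambda>x. (real (fst x) - l) ^ i * (real (snd x) - u) ^ j)"
    and "measure_pmf.expectation (PP l u) (\<lambda>x. (real (fst x) - l) ^ i * (real (snd x) - u) ^ j)
         = cmom l i * cmom u j"
  using pair_prod_expectation[OF poi_integrable_cpow[OF assms(1)] poi_integrable_cpow[OF assms(2)]]
  unfolding cmom_def by auto

definition polyt :: "real \<Rightarrow> real \<Rightarrow> (real \<times> nat \<times> nat) list \<Rightarrow> real" where
  "polyt x y ts = sum_list (map (\<lambda>(c,i,j). c * x ^ i * y ^ j) ts)"

definition polye :: "real \<Rightarrow> real \<Rightarrow> (real \<times> nat \<times> nat) list \<Rightarrow> real" where
  "polye l u ts = sum_list (map (\<lambda>(c,i,j). c * cmom l i * cmom u j) ts)"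

lemma PP_poly:
  assumes "l \<ge> 0" "u \<ge> 0"
  shows "integrable (PP l u) (\<lambda>x. polyt (real (fst x) - l) (real (snd x) - u) ts)
       \<and> measure_pmf.expectation (PP l u) (\<lambda>x. polyt (real (fst x) - l) (real (snd x) - u) ts) = polye l u ts"
proof (induction ts)
  case Nil
  then show ?case by (simp add: polyt_def polye_def)
next
  case (Cons t ts)
  obtain c i j where t: "t = (c, i, j)" by (cases t) auto
  have eq: "(\<lambda>x. polyt (real (fst x) - l) (real (snd x) - u) (t # ts))
     = (\<lambda>x. c * ((real (fst x) - l) ^ i * (real (snd x) - u) ^ j) + polyt (real (fst x) - l) (real (snd x) - u) ts)"
    by (simp add: t polyt_def fun_eq_iff mult.assoc)
  have i1: "integrable (PP l u) (\<lambda>x. c * ((real (fst x) - l) ^ i * (real (snd x) - u) ^ j))"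
    using PP_mono(1)[OF assms] by simp
  show ?case unfolding eq
    using Cons.IH i1 PP_mono[OF assms, of i j]
    by (simp add: t polye_def)
qed

lemma PP_poly_cong:
  assumes "l \<ge> 0" "u \<ge> 0"
    and "\<And>a b. Q a b = polyt (real a - l) (real b - u) ts"
  shows "integrable (PP l u) (\<lambda>x. Q (fst x) (snd x))"
    and "measure_pmf.expectation (PP l u) (\<lambda>x. Q (fst x) (snd x)) = polye l u ts"
  using PP_poly[OF assms(1,2), of ts] assms(3) by simp_all

definition zf :: "nat \<Rightarrow> nat \<Rightarrow> real" where
  "zf a b = (real a - real b)^2 - real a - real b"

lemma cmom_Suc0: "r \<ge> 0 \<Longrightarrow> cmom r (Suc 0) = 0"
  using cmom_vals(2)[of r] by simp

lemma E1:
  assumes l: "l \<ge> 0" and u: "u \<ge> 0"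
  shows "integrable (PP l u) (\<lambda>x. (\<lambda>a b. zf a b) (fst x) (snd x))"
    and "measure_pmf.expectation (PP l u) (\<lambda>x. (\<lambda>a b. zf a b) (fst x) (snd x)) = (l - u)^2"
proof -
  have pw: "\<And>a b. (\<lambda>a b. zf a b) a b = polyt (real a - l) (real b - u) [(((-1)*u + u^2 + (-1)*l + (-2)*l*u + l^2), 0, 0), (((-1) + (2)*u + (-2)*l), 0, 1), (((1)), 0, 2), (((-1) + (-2)*u + (2)*l), 1, 0), (((-2)), 1, 1), (((1)), 2, 0)]"
    by (simp add: polyt_def zf_def; algebra)
  note R = PP_poly_cong[OF l u pw]
  show "integrable (PP l u) (\<lambda>x. (\<lambda>a b. zf a b) (fst x) (snd x))" by (rule R(1))
  have "polye l u [(((-1)*u + u^2 + (-1)*l + (-2)*l*u + l^2), 0, 0), (((-1) + (2)*u + (-2)*l), 0, 1), (((1)), 0, 2), (((-1) + (-2)*u + (2)*l), 1, 0), (((-2)), 1, 1), (((1)), 2, 0)] = (l - u)^2"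
    by (simp add: polye_def cmom_vals[OF l] cmom_vals[OF u] cmom_Suc0[OF l] cmom_Suc0[OF u]; algebra)
  with R(2) show "measure_pmf.expectation (PP l u) (\<lambda>x. (\<lambda>a b. zf a b) (fst x) (snd x)) = (l - u)^2" by simp
qed

lemma E2:
  assumes l: "l \<ge> 0" and u: "u \<ge> 0"
  shows "integrable (PP l u) (\<lambda>x. (\<lambda>a b. (zf a b - (l-u)^2)^2) (fst x) (snd x))"
    and "measure_pmf.expectation (PP l u) (\<lambda>x. (\<lambda>a b. (zf a b - (l-u)^2)^2) (fst x) (snd x)) = 2*(l+u)^2 + 4*(l-u)^2*(l+u)"
proof -
  have pw: "\<And>a b. (\<lambda>a b. (zf a b - (l-u)^2)^2) a b = polyt (real a - l) (real b - u) [((u^2 + (2)*l*u + l^2), 0, 0), (((2)*u + (-4)*u^2 + (2)*l + (4)*l^2), 0, 1), (((1) + (-6)*u + (4)*u^2 + (2)*l + (-8)*l*u + (4)*l^2), 0, 2), (((-2) + (4)*u + (-4)*l), 0, 3), (((1)), 0, 4), (((2)*u + (4)*u^2 + (2)*l + (-4)*l^2), 1, 0), (((2) + (4)*u + (-8)*u^2 + (4)*l + (16)*l*u + (-8)*l^2), 1, 1), (((2) + (-12)*u + (12)*l), 1, 2), (((-4)), 1, 3), (((1) + (2)*u + (4)*u^2 + (-6)*l + (-8)*l*u + (4)*l^2), 2, 0), (((2) + (12)*u + (-12)*l), 2, 1), (((6)), 2, 2), (((-2) + (-4)*u + (4)*l), 3, 0), (((-4)), 3, 1), (((1)), 4, 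0)]"
    by (simp add: polyt_def zf_def; algebra)
  note R = PP_poly_cong[OF l u pw]
  show "integrable (PP l u) (\<lambda>x. (\<lambda>a b. (zf a b - (l-u)^2)^2) (fst x) (snd x))" by (rule R(1))
  have "polye l u [((u^2 + (2)*l*u + l^2), 0, 0), (((2)*u + (-4)*u^2 + (2)*l + (4)*l^2), 0, 1), (((1) + (-6)*u + (4)*u^2 + (2)*l + (-8)*l*u + (4)*l^2), 0, 2), (((-2) + (4)*u + (-4)*l), 0, 3), (((1)), 0, 4), (((2)*u + (4)*u^2 + (2)*l + (-4)*l^2), 1, 0), (((2) + (4)*u + (-8)*u^2 + (4)*l + (16)*l*u + (-8)*l^2), 1, 1), (((2) + (-12)*u + (12)*l), 1, 2), (((-4)), 1, 3), (((1) + (2)*u + (4)*u^2 + (-6)*l + (-8)*l*u + (4)*l^2), 2, 0), (((2) + (12)*u + (-12)*l), 2, 1), (((6)), 2, 2), (((-2) + (-4)*u + (4)*l), 3, 0), (((-4)), 3, 1), (((1)), 4, 0)] = 2*(l+u)^2 + 4*(l-u)^2*(l+u)"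
    by (simp add: polye_def cmom_vals[OF l] cmom_vals[OF u] cmom_Suc0[OF l] cmom_Suc0[OF u]; algebra)
  with R(2) show "measure_pmf.expectation (PP l u) (\<lambda>x. (\<lambda>a b. (zf a b - (l-u)^2)^2) (fst x) (snd x)) = 2*(l+u)^2 + 4*(l-u)^2*(l+u)" by simp
qed

lemma E3:
  assumes l: "l \<ge> 0" and u: "u \<ge> 0"
  shows "integrable (PP l u) (\<lambda>x. (\<lambda>a b. (real a - real b - (l-u))^4) (fst x) (snd x))"
    and "measure_pmf.expectation (PP l u) (\<lambda>x. (\<lambda>a b. (real a - real b - (l-u))^4) (fst x) (snd x)) = (l+u) + 3*(l+u)^2"
proof -
  have pw: "\<And>a b. (\<lambda>a b. (real a - real b - (l-u))^4) a b = polyt (real a - l) (real b - u) [(((1)), 0, 4), (((-4)), 1, 3), (((6)), 2, 2), (((-4)), 3, 1), (((1)), 4, 0)]"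
    by (simp add: polyt_def zf_def; algebra)
  note R = PP_poly_cong[OF l u pw]
  show "integrable (PP l u) (\<lambda>x. (\<lambda>a b. (real a - real b - (l-u))^4) (fst x) (snd x))" by (rule R(1))
  have "polye l u [(((1)), 0, 4), (((-4)), 1, 3), (((6)), 2, 2), (((-4)), 3, 1), (((1)), 4, 0)] = (l+u) + 3*(l+u)^2"
    by (simp add: polye_def cmom_vals[OF l] cmom_vals[OF u] cmom_Suc0[OF l] cmom_Suc0[OF u]; algebra)
  with R(2) show "measure_pmf.expectation (PP l u) (\<lambda>x. (\<lambda>a b. (real a - real b - (l-u))^4) (fst x) (snd x)) = (l+u) + 3*(l+u)^2" by simp
qed

lemma E4:
  assumes l: "l \<ge> 0" and u: "u \<ge> 0"
  shows "integrable (PP l u) (\<lambda>x. (\<lambda>a b. (real a + real b - (l+u))^4) (fst x) (snd x))"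
    and "measure_pmf.expectation (PP l u) (\<lambda>x. (\<lambda>a b. (real a + real b - (l+u))^4) (fst x) (snd x)) = (l+u) + 3*(l+u)^2"
proof -
  have pw: "\<And>a b. (\<lambda>a b. (real a + real b - (l+u))^4) a b = polyt (real a - l) (real b - u) [(((1)), 0, 4), (((4)), 1, 3), (((6)), 2, 2), (((4)), 3, 1), (((1)), 4, 0)]"
    by (simp add: polyt_def zf_def; algebra)
  note R = PP_poly_cong[OF l u pw]
  show "integrable (PP l u) (\<lambda>x. (\<lambda>a b. (real a + real b - (l+u))^4) (fst x) (snd x))" by (rule R(1))
  have "polye l u [(((1)), 0, 4), (((4)), 1, 3), (((6)), 2, 2), (((4)), 3, 1), (((1)), 4, 0)] = (l+u) + 3*(l+u)^2"
    by (simp add: polye_def cmom_vals[OF l] cmom_vals[OF u] cmom_Suc0[OF l] cmom_Suc0[OF u]; algebra)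
  with R(2) show "measure_pmf.expectation (PP l u) (\<lambda>x. (\<lambda>a b. (real a + real b - (l+u))^4) (fst x) (snd x)) = (l+u) + 3*(l+u)^2" by simp
qed

lemma E5a:
  assumes l: "l \<ge> 0" and u: "u \<ge> 0"
  shows "integrable (PP l u) (\<lambda>x. (\<lambda>a b. (real a - real b)^2) (fst x) (snd x))"
    and "measure_pmf.expectation (PP l u) (\<lambda>x. (\<lambda>a b. (real a - real b)^2) (fst x) (snd x)) = (l-u)^2 + (l+u)"
proof -
  have pw: "\<And>a b. (\<lambda>a b. (real a - real b)^2) a b = polyt (real a - l) (real b - u) [((u^2 + (-2)*l*u + l^2), 0, 0), (((2)*u + (-2)*l), 0, 1), (((1)), 0, 2), (((-2)*u + (2)*l), 1, 0), (((-2)), 1, 1), (((1)), 2, 0)]"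
    by (simp add: polyt_def zf_def; algebra)
  note R = PP_poly_cong[OF l u pw]
  show "integrable (PP l u) (\<lambda>x. (\<lambda>a b. (real a - real b)^2) (fst x) (snd x))" by (rule R(1))
  have "polye l u [((u^2 + (-2)*l*u + l^2), 0, 0), (((2)*u + (-2)*l), 0, 1), (((1)), 0, 2), (((-2)*u + (2)*l), 1, 0), (((-2)), 1, 1), (((1)), 2, 0)] = (l-u)^2 + (l+u)"
    by (simp add: polye_def cmom_vals[OF l] cmom_vals[OF u] cmom_Suc0[OF l] cmom_Suc0[OF u]; algebra)
  with R(2) show "measure_pmf.expectation (PP l u) (\<lambda>x. (\<lambda>a b. (real a - real b)^2) (fst x) (snd x)) = (l-u)^2 + (l+u)" by simp
qed

lemma E5b:
  assumes l: "l \<ge> 0" and u: "u \<ge> 0"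
  shows "integrable (PP l u) (\<lambda>x. (\<lambda>a b. real a + real b) (fst x) (snd x))"
    and "measure_pmf.expectation (PP l u) (\<lambda>x. (\<lambda>a b. real a + real b) (fst x) (snd x)) = l+u"
proof -
  have pw: "\<And>a b. (\<lambda>a b. real a + real b) a b = polyt (real a - l) (real b - u) [((u + l), 0, 0), (((1)), 0, 1), (((1)), 1, 0)]"
    by (simp add: polyt_def zf_def; algebra)
  note R = PP_poly_cong[OF l u pw]
  show "integrable (PP l u) (\<lambda>x. (\<lambda>a b. real a + real b) (fst x) (snd x))" by (rule R(1))
  have "polye l u [((u + l), 0, 0), (((1)), 0, 1), (((1)), 1, 0)] = l+u"
    by (simp add: polye_def cmom_vals[OF l] cmom_vals[OF u] cmom_Suc0[OF l] cmom_Suc0[OF u]; algebra)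
  with R(2) show "measure_pmf.expectation (PP l u) (\<lambda>x. (\<lambda>a b. real a + real b) (fst x) (snd x)) = l+u" by simp
qed

lemma pair_Pi_pmf:
  assumes A: "finite A"
  shows "pair_pmf (Pi_pmf A d1 P) (Pi_pmf A d2 Q)
    = map_pmf (\<lambda>h. (\<lambda>i. fst (h i), \<lambda>i. snd (h i))) (Pi_pmf A (d1, d2) (\<lambda>i. pair_pmf (P i) (Q i)))"
proof (rule pmf_eqI)
  fix z :: "('a \<Rightarrow> 'b) \<times> ('a \<Rightarrow> 'c)"
  obtain f g where z: "z = (f, g)" by (cases z)
  define G :: "('a \<Rightarrow> 'b \<times> 'c) \<Rightarrow> ('a \<Rightarrow> 'b) \<times> ('a \<Rightarrow> 'c)" where
    "G = (\<lambda>h. (\<lambda>i. fst (h i), \<lambda>i. snd (h i)))"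
  have inj: "inj G" unfolding G_def inj_def by (auto simp: fun_eq_iff prod_eq_iff)
  have zG: "z = G (\<lambda>i. (f i, g i))" unfolding z G_def by simp
  have "pmf (map_pmf G (Pi_pmf A (d1, d2) (\<lambda>i. pair_pmf (P i) (Q i)))) z
      = pmf (Pi_pmf A (d1, d2) (\<lambda>i. pair_pmf (P i) (Q i))) (\<lambda>i. (f i, g i))"
    unfolding zG by (rule pmf_map_inj'[OF inj])
  also have "\<dots> = pmf (Pi_pmf A d1 P) f * pmf (Pi_pmf A d2 Q) g"
    using A by (auto simp: pmf_Pi pmf_pair prod.distrib)
  also have "\<dots> = pmf (pair_pmf (Pi_pmf A d1 P) (Pi_pmf A d2 Q)) z"
    unfolding z by (simp add: pmf_pair)
  finally show "pmf (pair_pmf (Pi_pmf A d1 P) (Pi_pmf A d2 Q)) z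
    = pmf (map_pmf (\<lambda>h. (\<lambda>i. fst (h i), \<lambda>i. snd (h i))) (Pi_pmf A (d1, d2) (\<lambda>i. pair_pmf (P i) (Q i)))) z"
    unfolding G_def by simp
qed

definition PPi :: "nat \<Rightarrow> real \<Rightarrow> (nat \<Rightarrow> real) \<Rightarrow> (nat \<Rightarrow> real) \<Rightarrow> (nat \<Rightarrow> nat \<times> nat) pmf" where
  "PPi n m p q = Pi_pmf {..<n} (0, 0) (\<lambda>i. PP (m * p i) (m * q i))"

lemma counts_pair:
  "pair_pmf (counts n m p) (counts n m q) = map_pmf (\<lambda>h. (\<lambda>i. fst (h i), \<lambda>i. snd (h i))) (PPi n m p q)"
  unfolding counts_def PPi_def by (rule pair_Pi_pmf) simp

lemma PPi_sum:
  fixes g :: "nat \<Rightarrow> nat \<times> nat \<Rightarrow> real"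
  assumes "\<And>i. i < n \<Longrightarrow> integrable (PP (m * p i) (m * q i)) (g i)"
  shows "integrable (PPi n m p q) (\<lambda>h. \<Sum>i<n. g i (h i))"
    and "measure_pmf.expectation (PPi n m p q) (\<lambda>h. \<Sum>i<n. g i (h i))
       = (\<Sum>i<n. measure_pmf.expectation (PP (m * p i) (m * q i)) (g i))"
proof -
  have int: "integrable (PPi n m p q) (\<lambda>h. g i (h i))" if "i < n" for i
    unfolding PPi_def by (rule Pi_comp_integrable) (use assms that in auto)
  thus "integrable (PPi n m p q) (\<lambda>h. \<Sum>i<n. g i (h i))" by auto
  have "measure_pmf.expectation (PPi n m p q) (\<lambda>h. \<Sum>i<n. g i (h i))
     = (\<Sum>i<n. measure_pmf.expectation (PPi n m p q) (\<lambda>h. g i (h i)))"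
    by (rule Bochner_Integration.integral_sum) (use int in auto)
  also have "\<dots> = (\<Sum>i<n. measure_pmf.expectation (PP (m * p i) (m * q i)) (g i))"
    unfolding PPi_def by (intro sum.cong refl Pi_comp_expectation) auto
  finally show "measure_pmf.expectation (PPi n m p q) (\<lambda>h. \<Sum>i<n. g i (h i))
       = (\<Sum>i<n. measure_pmf.expectation (PP (m * p i) (m * q i)) (g i))" .
qed

lemma Zstat_zf: "Zstat n fh X Y = (\<Sum>i<n. zf (X i) (Y i) / fh i)"
  unfolding Zstat_def zf_def by simp

lemma Zcond_expect:
  fixes g :: "real \<Rightarrow> real"
  shows "measure_pmf.expectation (Zcond n m p q fh) g
     = measure_pmf.expectation (PPi n m p q) (\<lambda>h. g (\<Sum>i<n. zf (fst (h i)) (snd (h i)) / fh i))"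
  unfolding Zcond_def counts_pair by (simp add: Zstat_zf)

lemma Zcond_mean:
  assumes nn: "\<And>i. i < n \<Longrightarrow> 0 \<le> m * p i \<and> 0 \<le> m * q i"
  shows "integrable (PPi n m p q) (\<lambda>h. \<Sum>i<n. zf (fst (h i)) (snd (h i)) / fh i)"
    and "measure_pmf.expectation (Zcond n m p q fh) (\<lambda>z. z) = (\<Sum>i<n. (m * p i - m * q i)^2 / fh i)"
proof -
  have int: "integrable (PP (m * p i) (m * q i)) (\<lambda>x. zf (fst x) (snd x) / fh i)"
    and ex: "measure_pmf.expectation (PP (m * p i) (m * q i)) (\<lambda>x. zf (fst x) (snd x) / fh i)
       = (m * p i - m * q i)^2 / fh i" if "i < n" for i
    using E1[of "m * p i" "m * q i"] nn[OF that] by auto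
  show "integrable (PPi n m p q) (\<lambda>h. \<Sum>i<n. zf (fst (h i)) (snd (h i)) / fh i)"
    by (rule PPi_sum(1)[where g = "\<lambda>i x. zf (fst x) (snd x) / fh i", simplified]) (use int in auto)
  have "measure_pmf.expectation (PPi n m p q) (\<lambda>h. \<Sum>i<n. zf (fst (h i)) (snd (h i)) / fh i)
     = (\<Sum>i<n. measure_pmf.expectation (PP (m * p i) (m * q i)) (\<lambda>x. zf (fst x) (snd x) / fh i))"
    by (rule PPi_sum(2)[where g = "\<lambda>i x. zf (fst x) (snd x) / fh i"]) (use int in auto)
  also have "\<dots> = (\<Sum>i<n. (m * p i - m * q i)^2 / fh i)"
    by (intro sum.cong refl ex) auto
  finally show "measure_pmf.expectation (Zcond n m p q fh) (\<lambda>z. z) = (\<Sum>i<n. (m * p i - m * q i)^2 / fh i)"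
    unfolding Zcond_expect by simp
qed

lemma Zcond_var:
  assumes nn: "\<And>i. i < n \<Longrightarrow> 0 \<le> m * p i \<and> 0 \<le> m * q i"
  shows "measure_pmf.variance (Zcond n m p q fh) (\<lambda>z. z)
     = (\<Sum>i<n. (2 * (m * p i + m * q i)^2 + 4 * (m * p i - m * q i)^2 * (m * p i + m * q i)) / (fh i)^2)"
proof -
  define Dl where "Dl i = (m * p i - m * q i)^2" for i
  define Y where "Y i x = (zf (fst x) (snd x) - Dl i) / fh i" for i x
  define R where "R i = PP (m * p i) (m * q i)" for i
  have PPi: "PPi n m p q = Pi_pmf {..<n} (0,0) R" unfolding PPi_def R_def ..
  have intY: "integrable (R i) (Y i)" if "i < n" for i
    using E1(1)[of "m * p i" "m * q i"] nn[OF that] unfolding Y_def R_def by auto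
  have EY: "measure_pmf.expectation (R i) (Y i) = 0" if "i < n" for i
  proof -
    have i1: "integrable (R i) (\<lambda>x. zf (fst x) (snd x))"
      using E1(1)[of "m * p i" "m * q i"] nn[OF that] unfolding R_def by auto
    have "measure_pmf.expectation (R i) (Y i) = (measure_pmf.expectation (R i) (\<lambda>x. zf (fst x) (snd x)) - Dl i) / fh i"
      unfolding Y_def using i1 by (simp add: Bochner_Integration.integral_diff)
    also have "measure_pmf.expectation (R i) (\<lambda>x. zf (fst x) (snd x)) = Dl i"
      using E1(2)[of "m * p i" "m * q i"] nn[OF that] unfolding R_def Dl_def by auto
    finally show ?thesis by simp
  qed
  have intY2: "integrable (R i) (\<lambda>x. Y i x * Y i x)"
   and EY2: "measure_pmf.expectation (R i) (\<lambda>x. Y i x * Y i x)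
      = (2 * (m * p i + m * q i)^2 + 4 * (m * p i - m * q i)^2 * (m * p i + m * q i)) / (fh i)^2" if "i < n" for i
  proof -
    have eq: "(\<lambda>x. Y i x * Y i x) = (\<lambda>x. (zf (fst x) (snd x) - Dl i)^2 / (fh i)^2)"
      unfolding Y_def by (simp add: fun_eq_iff power2_eq_square)
    show "integrable (R i) (\<lambda>x. Y i x * Y i x)"
      unfolding eq using E2(1)[of "m * p i" "m * q i"] nn[OF that] unfolding R_def Dl_def by auto
    show "measure_pmf.expectation (R i) (\<lambda>x. Y i x * Y i x)
      = (2 * (m * p i + m * q i)^2 + 4 * (m * p i - m * q i)^2 * (m * p i + m * q i)) / (fh i)^2"
      unfolding eq using E2(2)[of "m * p i" "m * q i"] nn[OF that] unfolding R_def Dl_def by auto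
  qed
  have cross_int: "integrable (Pi_pmf {..<n} (0,0) R) (\<lambda>h. Y i (h i) * Y j (h j))"
   and cross_E: "measure_pmf.expectation (Pi_pmf {..<n} (0,0) R) (\<lambda>h. Y i (h i) * Y j (h j))
        = (if i = j then (2 * (m * p i + m * q i)^2 + 4 * (m * p i - m * q i)^2 * (m * p i + m * q i)) / (fh i)^2 else 0)"
    if ij: "i < n" "j < n" for i j
  proof -
    have "integrable (Pi_pmf {..<n} (0,0) R) (\<lambda>h. Y i (h i) * Y j (h j))
       \<and> measure_pmf.expectation (Pi_pmf {..<n} (0,0) R) (\<lambda>h. Y i (h i) * Y j (h j))
        = (if i = j then (2 * (m * p i + m * q i)^2 + 4 * (m * p i - m * q i)^2 * (m * p i + m * q i)) / (fh i)^2 else 0)"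
    proof (cases "i = j")
      case True
      have a: "integrable (Pi_pmf {..<n} (0,0) R) (\<lambda>h. (\<lambda>x. Y i x * Y i x) (h i))"
        by (rule Pi_comp_integrable) (use ij intY2 in auto)
      have b: "measure_pmf.expectation (Pi_pmf {..<n} (0,0) R) (\<lambda>h. (\<lambda>x. Y i x * Y i x) (h i))
          = measure_pmf.expectation (R i) (\<lambda>x. Y i x * Y i x)"
        by (rule Pi_comp_expectation) (use ij in auto)
      show ?thesis using a b EY2[OF ij(1)] True by simp
    next
      case False
      have pr: "(\<lambda>h. \<Prod>k\<in>{i,j}. Y k (h k)) = (\<lambda>h. Y i (h i) * Y j (h j))"
        using False by (simp add: fun_eq_iff)
      have a: "integrable (Pi_pmf {..<n} (0,0) R) (\<lambda>h. \<Prod>k\<in>{i,j}. Y k (h k))"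
        by (rule Pi_prod_expectation(2)) (use ij intY in auto)
      have b: "measure_pmf.expectation (Pi_pmf {..<n} (0,0) R) (\<lambda>h. \<Prod>k\<in>{i,j}. Y k (h k))
          = (\<Prod>k\<in>{i,j}. measure_pmf.expectation (R k) (Y k))"
        by (rule Pi_prod_expectation(1)) (use ij intY in auto)
      show ?thesis using a b EY[OF ij(1)] EY[OF ij(2)] False unfolding pr by simp
    qed
    thus "integrable (Pi_pmf {..<n} (0,0) R) (\<lambda>h. Y i (h i) * Y j (h j))"
      "measure_pmf.expectation (Pi_pmf {..<n} (0,0) R) (\<lambda>h. Y i (h i) * Y j (h j))
        = (if i = j then (2 * (m * p i + m * q i)^2 + 4 * (m * p i - m * q i)^2 * (m * p i + m * q i)) / (fh i)^2 else 0)"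
      by auto
  qed
  have mean: "measure_pmf.expectation (Zcond n m p q fh) (\<lambda>z. z) = (\<Sum>i<n. Dl i / fh i)"
    using Zcond_mean(2)[OF nn] unfolding Dl_def by simp
  have sq: "((\<Sum>i<n. zf (fst (h i)) (snd (h i)) / fh i) - (\<Sum>i<n. Dl i / fh i))^2
      = (\<Sum>i<n. \<Sum>j<n. Y i (h i) * Y j (h j))" for h
  proof -
    have "(\<Sum>i<n. zf (fst (h i)) (snd (h i)) / fh i) - (\<Sum>i<n. Dl i / fh i) = (\<Sum>i<n. Y i (h i))"
      unfolding Y_def by (simp add: sum_subtractf diff_divide_distrib)
    thus ?thesis by (simp add: power2_eq_square sum_product)
  qed
  have "measure_pmf.variance (Zcond n m p q fh) (\<lambda>z. z)
     = measure_pmf.expectation (Zcond n m p q fh) (\<lambda>z. (z - (\<Sum>i<n. Dl i / fh i))^2)"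
    by (simp only: mean)
  also have "\<dots> = measure_pmf.expectation (Pi_pmf {..<n} (0,0) R) (\<lambda>h. \<Sum>i<n. \<Sum>j<n. Y i (h i) * Y j (h j))"
    unfolding Zcond_expect PPi sq ..
  also have "\<dots> = (\<Sum>i<n. \<Sum>j<n. measure_pmf.expectation (Pi_pmf {..<n} (0,0) R) (\<lambda>h. Y i (h i) * Y j (h j)))"
    using cross_int
    by (subst Bochner_Integration.integral_sum, fastforce intro!: Bochner_Integration.integrable_sum)
       (intro sum.cong refl Bochner_Integration.integral_sum, auto)
  also have "\<dots> = (\<Sum>i<n. \<Sum>j<n. (if i = j then (2 * (m * p i + m * q i)^2 + 4 * (m * p i - m * q i)^2 * (m * p i + m * q i)) / (fh i)^2 else 0))"
    by (intro sum.cong refl cross_E) auto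
  also have "\<dots> = (\<Sum>i<n. (2 * (m * p i + m * q i)^2 + 4 * (m * p i - m * q i)^2 * (m * p i + m * q i)) / (fh i)^2)"
    by (intro sum.cong refl) (simp add: sum.delta)
  finally show ?thesis .
qed

definition Fh :: "real \<Rightarrow> real \<Rightarrow> real \<Rightarrow> real" where
  "Fh K a b = max (\<bar>a - b\<bar> / sqrt K) (max ((a + b) / K) 1)"

lemma Fh_ge1: "Fh K a b \<ge> 1" unfolding Fh_def by simp

lemma Fh_geA: "Fh K a b \<ge> \<bar>a - b\<bar> / sqrt K" unfolding Fh_def by simp
lemma Fh_geB: "Fh K a b \<ge> (a + b) / K" unfolding Fh_def by simp

lemma Fh_cases: "Fh K a b = 1 \<or> Fh K a b = \<bar>a - b\<bar> / sqrt K \<or> Fh K a b = (a + b) / K"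
  unfolding Fh_def by linarith

lemma absdiv_le:
  fixes x f K :: real
  assumes K: "K > 0" and f: "f > 0"
  shows "\<bar>x\<bar> / sqrt K \<le> x^2 / (2 * K * f) + f / 2"
proof -
  have sK: "sqrt K > 0" "(sqrt K)^2 = K" using K by auto
  have "0 \<le> (\<bar>x\<bar> / sqrt K - f)^2" by simp
  hence "0 \<le> x^2 / K - 2 * f * (\<bar>x\<bar> / sqrt K) + f^2"
    using sK by (simp add: power2_eq_square field_simps)
  hence "2 * f * (\<bar>x\<bar> / sqrt K) \<le> x^2 / K + f^2" by linarith
  hence "\<bar>x\<bar> / sqrt K \<le> (x^2 / K + f^2) / (2 * f)" using f by (simp add: field_simps)
  also have "\<dots> = x^2 / (2 * K * f) + f / 2" using f K by (simp add: field_simps power2_eq_square)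
  finally show ?thesis .
qed

lemma FB3:
  assumes K: "K \<ge> 1" and l: "l \<ge> 0" and u: "u \<ge> 0"
  shows "integrable (PP l u) (\<lambda>x. Fh K (real (fst x)) (real (snd x)))"
    and "measure_pmf.expectation (PP l u) (\<lambda>x. Fh K (real (fst x)) (real (snd x))) \<le> 4 * Fh K l u"
proof -
  define f where "f = Fh K l u"
  have f1: "f \<ge> 1" unfolding f_def by (rule Fh_ge1)
  have K0: "K > 0" using K by simp
  define G where "G x = (real (fst x) - real (snd x))^2 / (2 * K * f) + f / 2 + (real (fst x) + real (snd x)) / K + 1" for x
  have i1: "integrable (PP l u) (\<lambda>x. (real (fst x) - real (snd x))^2)" using E5a(1)[OF l u] by simp
  have i2: "integrable (PP l u) (\<lambda>x. real (fst x) + real (snd x))" using E5b(1)[OF l u] by simp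
  have e1: "measure_pmf.expectation (PP l u) (\<lambda>x. (real (fst x) - real (snd x))^2) = (l-u)^2 + (l+u)"
    using E5a(2)[OF l u] by simp
  have e2: "measure_pmf.expectation (PP l u) (\<lambda>x. real (fst x) + real (snd x)) = l + u"
    using E5b(2)[OF l u] by simp
  have iG: "integrable (PP l u) G"
    unfolding G_def using i1 i2 by auto
  have eG: "measure_pmf.expectation (PP l u) G = ((l-u)^2 + (l+u)) / (2 * K * f) + f / 2 + (l + u) / K + 1"
    unfolding G_def using i1 i2 e1 e2
    by (simp add: Bochner_Integration.integral_add Bochner_Integration.integral_diff)
  have bound: "Fh K a b \<le> (a - b)^2 / (2 * K * f) + f / 2 + (a + b) / K + 1" if "a \<ge> 0" "b \<ge> 0" for a b :: real
  proof -
    have "\<bar>a - b\<bar> / sqrt K \<le> (a - b)^2 / (2 * K * f) + f / 2" using absdiv_le[OF K0, of f "a - b"] f1 by simp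
    moreover have "(a + b) / K \<ge> 0" using that K0 by simp
    moreover have "(a - b)^2 / (2 * K * f) \<ge> 0" using K0 f1 by simp
    ultimately show ?thesis unfolding Fh_def using f1 by simp
  qed
  have pw: "Fh K (real (fst x)) (real (snd x)) \<le> G x" for x
    unfolding G_def by (rule bound) auto
  show iF: "integrable (PP l u) (\<lambda>x. Fh K (real (fst x)) (real (snd x)))"
  proof (rule Bochner_Integration.integrable_bound[OF iG])
    show "AE x in measure_pmf (PP l u). norm (Fh K (real (fst x)) (real (snd x))) \<le> norm (G x)"
    proof (rule AE_pmfI)
      fix x
      have "0 \<le> Fh K (real (fst x)) (real (snd x))" using Fh_ge1[of K] order_trans[OF zero_le_one] by blast
      thus "norm (Fh K (real (fst x)) (real (snd x))) \<le> norm (G x)" using pw[of x] by simp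
    qed
  qed simp
  have "measure_pmf.expectation (PP l u) (\<lambda>x. Fh K (real (fst x)) (real (snd x))) \<le> measure_pmf.expectation (PP l u) G"
    by (rule Bochner_Integration.integral_mono[OF iF iG pw])
  also have "\<dots> \<le> 4 * f"
  proof -
    have A: "\<bar>l - u\<bar> / sqrt K \<le> f" unfolding f_def by (rule Fh_geA)
    have B: "(l + u) / K \<le> f" unfolding f_def by (rule Fh_geB)
    have sK: "sqrt K > 0" "(sqrt K)^2 = K" using K0 by auto
    have A2: "(l - u)^2 / K \<le> f^2"
    proof -
      have "(\<bar>l - u\<bar> / sqrt K)^2 \<le> f^2" using A sK by (intro power_mono) auto
      thus ?thesis using sK by (simp add: power_divide)
    qed
    have t1: "(l-u)^2 / (2 * K * f) \<le> f / 2"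
      using A2 f1 K0 by (simp add: field_simps power2_eq_square)
    have t2: "(l+u) / (2 * K * f) \<le> f / 2"
    proof -
      have "(l+u) / (2 * K * f) = ((l+u) / K) / (2 * f)" by simp
      also have "\<dots> \<le> f / (2 * f)" using B f1 by (intro divide_right_mono) auto
      also have "\<dots> \<le> f / 2" using f1 by (simp add: field_simps)
      finally show ?thesis .
    qed
    have "((l-u)^2 + (l+u)) / (2 * K * f) = (l-u)^2 / (2 * K * f) + (l+u) / (2 * K * f)"
      by (simp add: add_divide_distrib)
    thus ?thesis unfolding eG using t1 t2 B f1 by linarith
  qed
  finally show "measure_pmf.expectation (PP l u) (\<lambda>x. Fh K (real (fst x)) (real (snd x))) \<le> 4 * Fh K l u"
    unfolding f_def .
qed

lemma divK: "(a::real) / K < b / K \<Longrightarrow> K > 0 \<Longrightarrow> a < b"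
  by (metis divide_less_cancel order_less_asym)

lemma aux2: "(w::real) < S / 4 \<Longrightarrow> 3 * S / 4 \<le> \<bar>w - S\<bar>"
  by (simp add: abs_if)

lemma aux34: "(w::real) < A / 4 \<Longrightarrow> A \<le> w + v \<Longrightarrow> 3 * A / 4 \<le> v"
  by linarith

lemma tail_pw:
  fixes F f t tau :: real
  assumes F: "F \<ge> 1" and f: "f > 0" and tau: "tau > 0"
    and imp: "F < f / 4 \<Longrightarrow> \<bar>t\<bar> \<ge> tau"
  shows "1 / F^2 \<le> 16 / f^2 + t^4 / tau^4"
proof (cases "F < f / 4")
  case True
  have "1 \<le> \<bar>t\<bar> / tau" using imp[OF True] tau by simp
  hence "1 \<le> (\<bar>t\<bar> / tau)^4" by (simp add: one_le_power)
  also have "(\<bar>t\<bar> / tau)^4 = t^4 / tau^4" by (simp add: power_divide power_even_abs)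
  finally have a: "1 \<le> t^4 / tau^4" .
  have "1 / F^2 \<le> 1" using F by (simp add: field_simps one_le_power)
  moreover have "16 / f^2 \<ge> 0" by simp
  ultimately show ?thesis using a by linarith
next
  case False
  hence "f / 4 \<le> F" by simp
  hence "(f/4)^2 \<le> F^2" using f by (intro power_mono) auto
  moreover have "F^2 > 0" using F by simp
  ultimately have "1 / F^2 \<le> 1 / (f/4)^2" using f by (intro divide_left_mono) auto
  also have "1 / (f/4)^2 = 16 / f^2" by (simp add: power2_eq_square field_simps)
  moreover have "0 \<le> t^4 / tau^4" using tau by (intro divide_nonneg_pos) (auto intro: zero_le_even_power)
  ultimately show ?thesis by linarith
qed

lemma inv_sq_integrable:
  "integrable (PP l u) (\<lambda>x. 1 / (Fh K (real (fst x)) (real (snd x)))^2)"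
proof (rule measure_pmf.integrable_const_bound[where B=1])
  show "AE x in measure_pmf (PP l u). norm (1 / (Fh K (real (fst x)) (real (snd x)))^2) \<le> 1"
  proof (rule AE_pmfI)
    fix x
    have "Fh K (real (fst x)) (real (snd x)) \<ge> 1" by (rule Fh_ge1)
    thus "norm (1 / (Fh K (real (fst x)) (real (snd x)))^2) \<le> 1"
      by (simp add: field_simps one_le_power)
  qed
qed simp

lemma FB2:
  assumes K: "K \<ge> 1" and l: "l \<ge> 0" and u: "u \<ge> 0"
  shows "measure_pmf.expectation (PP l u) (\<lambda>x. 1 / (Fh K (real (fst x)) (real (snd x)))^2) \<le> 29 / (Fh K l u)^2"
proof -
  define f where "f = Fh K l u"
  have f1: "f \<ge> 1" unfolding f_def by (rule Fh_ge1)
  have K0: "K > 0" using K by simp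
  have sK: "sqrt K > 0" "(sqrt K)^2 = K" "sqrt K \<ge> 1" using K0 K by auto
  note iF = inv_sq_integrable[of l u K]
  let ?g = "\<lambda>x. 1 / (Fh K (real (fst x)) (real (snd x)))^2"
  show ?thesis
  proof (cases "f \<le> 4")
    case True
    have "measure_pmf.expectation (PP l u) ?g \<le> measure_pmf.expectation (PP l u) (\<lambda>x. 1)"
    proof (rule Bochner_Integration.integral_mono[OF iF])
      fix x
      have "Fh K (real (fst x)) (real (snd x)) \<ge> 1" by (rule Fh_ge1)
      thus "?g x \<le> 1" by (simp add: field_simps one_le_power)
    qed simp
    also have "\<dots> = 1" by simp
    also have "1 \<le> 16 / f^2"
    proof -
      have "f^2 \<le> 4^2" using True f1 by (intro power_mono) auto
      thus ?thesis using f1 by (simp add: field_simps)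
    qed
    moreover have "16 / f^2 \<le> 29 / f^2" using f1 by (intro divide_right_mono) auto
    ultimately show ?thesis unfolding f_def[symmetric] by linarith
  next
    case False
    hence f4: "f > 4" by simp
    have c: "f = \<bar>l - u\<bar> / sqrt K \<or> f = (l + u) / K"
      using Fh_cases[of K l u] f4 unfolding f_def by auto
    have A: "\<bar>l - u\<bar> / sqrt K \<le> f" unfolding f_def by (rule Fh_geA)
    have B: "(l + u) / K \<le> f" unfolding f_def by (rule Fh_geB)
    have f0: "f > 0" using f4 by simp
    from c show ?thesis
    proof
      assume fA: "f = \<bar>l - u\<bar> / sqrt K"
      define tau where "tau = 3 * \<bar>l - u\<bar> / 4"
      have D: "\<bar>l - u\<bar> = f * sqrt K" using fA sK by simp
      have D4: "\<bar>l - u\<bar> > 4" using D f4 sK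
        by (metis less_le_trans mult_less_cancel_left1 mult_le_cancel_left1 f0 linorder_not_le order.strict_implies_order)
      have tau0: "tau > 0" unfolding tau_def using D4 by simp
      have pw: "?g x \<le> 16 / f^2 + (real (fst x) - real (snd x) - (l - u))^4 / tau^4" for x
      proof (rule tail_pw[OF Fh_ge1 f0 tau0])
        assume lt: "Fh K (real (fst x)) (real (snd x)) < f / 4"
        have lt': "Fh K (real (fst x)) (real (snd x)) < \<bar>l - u\<bar> / sqrt K / 4" using lt fA by simp
        have "\<bar>real (fst x) - real (snd x)\<bar> / sqrt K < \<bar>l - u\<bar> / sqrt K / 4"
          using Fh_geA[of "real (fst x)" "real (snd x)" K] lt' by linarith
        hence "\<bar>real (fst x) - real (snd x)\<bar> < \<bar>l - u\<bar> / 4" using sK by (simp add: field_simps)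
        moreover have "\<bar>l - u\<bar> \<le> \<bar>real (fst x) - real (snd x)\<bar> + \<bar>real (fst x) - real (snd x) - (l - u)\<bar>"
          using abs_triangle_ineq4[of "real (fst x) - real (snd x)" "real (fst x) - real (snd x) - (l - u)"] by simp
        ultimately show "\<bar>real (fst x) - real (snd x) - (l - u)\<bar> \<ge> tau" unfolding tau_def
          by (rule aux34)
      qed
      have i3: "integrable (PP l u) (\<lambda>x. (real (fst x) - real (snd x) - (l - u))^4)" using E3(1)[OF l u] by simp
      have e3: "measure_pmf.expectation (PP l u) (\<lambda>x. (real (fst x) - real (snd x) - (l - u))^4) = (l+u) + 3*(l+u)^2"
        using E3(2)[OF l u] by simp
      have "measure_pmf.expectation (PP l u) ?g \<le> measure_pmf.expectation (PP l u) (\<lambda>x. 16 / f^2 + (real (fst x) - real (snd x) - (l - u))^4 / tau^4)"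
        by (rule Bochner_Integration.integral_mono[OF iF _ pw]) (use i3 in auto)
      also have "\<dots> = 16 / f^2 + ((l+u) + 3*(l+u)^2) / tau^4"
        using i3 e3 by simp
      also have "((l+u) + 3*(l+u)^2) / tau^4 \<le> 13 / f^2"
      proof -
        have s1: "l + u \<ge> 1" using D4 l u by linarith
        have "l + u \<le> \<bar>l - u\<bar> * sqrt K"
        proof -
          have "(l + u) / K \<le> \<bar>l - u\<bar> / sqrt K" using B fA by simp
          hence "l + u \<le> \<bar>l - u\<bar> / sqrt K * K" using K0 by (simp add: field_simps)
          also have "\<bar>l - u\<bar> / sqrt K * K = \<bar>l - u\<bar> * sqrt K"
            using sK by (metis (no_types, lifting) nonzero_mult_div_cancel_right power2_eq_square times_divide_eq_left times_divide_eq_right order_less_irrefl)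
          finally show ?thesis .
        qed
        hence ss: "(l+u)^2 \<le> (\<bar>l - u\<bar> * sqrt K)^2" using s1 by (intro power_mono) auto
        have "(l+u) + 3*(l+u)^2 \<le> 4 * (l+u)^2" using s1 by (simp add: power2_eq_square)
        also have "\<dots> \<le> 4 * ((l - u)^2 * K)" using ss sK by (simp add: power_mult_distrib)
        finally have num: "(l+u) + 3*(l+u)^2 \<le> 4 * ((l - u)^2 * K)" .
        have t4: "tau^4 = 81 / 256 * (l-u)^2 * (l-u)^2"
          unfolding tau_def by (simp add: power_divide power_mult_distrib eval_nat_numeral power_even_abs)
        have f2: "f^2 = (l-u)^2 / K" using fA sK by (simp add: power_divide)
        have D2: "(l-u)^2 > 0" using D4 by simp
        have "((l+u) + 3*(l+u)^2) / tau^4 \<le> 4 * ((l - u)^2 * K) / tau^4"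
          using num tau0 by (intro divide_right_mono) auto
        also have "\<dots> = 1024 / 81 * (K / (l-u)^2)" unfolding t4 using D2 by (simp add: field_simps)
        also have "\<dots> \<le> 13 * (K / (l-u)^2)" using K0 D2 by (intro mult_right_mono) auto
        also have "\<dots> = 13 / f^2" unfolding f2 using K0 D2 by (simp add: field_simps)
        finally show ?thesis .
      qed
      finally show ?thesis unfolding f_def by simp
    next
      assume fB: "f = (l + u) / K"
      define s where "s = l + u"
      define tau where "tau = 3 * s / 4"
      have sf: "s = f * K" using fB K0 unfolding s_def by simp
      have s4: "s > 4" using sf f4 K by (metis less_le_trans mult_le_cancel_left1 f0 linorder_not_le order.strict_implies_order)
      have tau0: "tau > 0" unfolding tau_def using s4 by simp
      have pw: "?g x \<le> 16 / f^2 + (real (fst x) + real (snd x) - (l + u))^4 / tau^4" for x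
      proof (rule tail_pw[OF Fh_ge1 f0 tau0])
        assume lt: "Fh K (real (fst x)) (real (snd x)) < f / 4"
        have lt': "Fh K (real (fst x)) (real (snd x)) < s / K / 4" using lt fB unfolding s_def by simp
        have "(real (fst x) + real (snd x)) / K < s / K / 4"
          using Fh_geB[of "real (fst x)" "real (snd x)" K] lt' by linarith
        hence "(real (fst x) + real (snd x)) / K < (s / 4) / K" by simp
        hence "real (fst x) + real (snd x) < s / 4" using K0 by (rule divK)
        thus "\<bar>real (fst x) + real (snd x) - (l + u)\<bar> \<ge> tau" unfolding tau_def s_def by (rule aux2)
      qed
      have i4: "integrable (PP l u) (\<lambda>x. (real (fst x) + real (snd x) - (l + u))^4)" using E4(1)[OF l u] by simp
      have e4: "measure_pmf.expectation (PP l u) (\<lambda>x. (real (fst x) + real (snd x) - (l + u))^4) = (l+u) + 3*(l+u)^2"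
        using E4(2)[OF l u] by simp
      have "measure_pmf.expectation (PP l u) ?g \<le> measure_pmf.expectation (PP l u) (\<lambda>x. 16 / f^2 + (real (fst x) + real (snd x) - (l + u))^4 / tau^4)"
        by (rule Bochner_Integration.integral_mono[OF iF _ pw]) (use i4 in auto)
      also have "\<dots> = 16 / f^2 + (s + 3 * s^2) / tau^4"
        using i4 e4 unfolding s_def by simp
      also have "(s + 3 * s^2) / tau^4 \<le> 13 / f^2"
      proof -
        have "s + 3 * s^2 \<le> 4 * s^2" using s4 by (simp add: power2_eq_square)
        hence "(s + 3 * s^2) / tau^4 \<le> 4 * s^2 / tau^4" using tau0 by (intro divide_right_mono) auto
        also have "\<dots> = 1024 / 81 / s^2" unfolding tau_def using s4
          by (simp add: power_divide power_mult_distrib eval_nat_numeral)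
        also have "\<dots> \<le> 13 / s^2" using s4 by (intro divide_right_mono) auto
        also have "\<dots> \<le> 13 / f^2"
        proof -
          have "f \<le> s" using sf K f0 by simp
          hence "f^2 \<le> s^2" using f0 by (intro power_mono) auto
          thus ?thesis using f0 s4 by (intro divide_left_mono) (auto intro!: mult_pos_pos)
        qed
        finally show ?thesis .
      qed
      finally show ?thesis unfolding f_def by simp
    qed
  qed
qed

lemma inv_integrable:
  "integrable (PP l u) (\<lambda>x. 1 / Fh K (real (fst x)) (real (snd x)))"
proof (rule measure_pmf.integrable_const_bound[where B=1])
  show "AE x in measure_pmf (PP l u). norm (1 / Fh K (real (fst x)) (real (snd x))) \<le> 1"
  proof (rule AE_pmfI)
    fix x
    have "Fh K (real (fst x)) (real (snd x)) \<ge> 1" by (rule Fh_ge1)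
    thus "norm (1 / Fh K (real (fst x)) (real (snd x))) \<le> 1" by simp
  qed
qed simp

lemma inv_amgm:
  fixes F f :: real
  assumes "F > 0" "f > 0"
  shows "1 / F \<le> (f / F^2 + 1 / f) / 2"
proof -
  have "0 \<le> (f - F)^2" by simp
  hence "2 * f * F \<le> f^2 + F^2" by (simp add: power2_eq_square algebra_simps)
  hence "2 * f * F / (f * F^2) \<le> (f^2 + F^2) / (f * F^2)"
    using assms by (intro divide_right_mono) auto
  moreover have "2 * f * F / (f * F^2) = 2 / F" using assms by (simp add: power2_eq_square field_simps)
  moreover have "(f^2 + F^2) / (f * F^2) = f / F^2 + 1 / f" using assms by (simp add: power2_eq_square field_simps)
  ultimately show ?thesis by simp
qed

lemma FB1:
  assumes K: "K \<ge> 1" and l: "l \<ge> 0" and u: "u \<ge> 0"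
  shows "measure_pmf.expectation (PP l u) (\<lambda>x. 1 / Fh K (real (fst x)) (real (snd x))) \<le> 15 / Fh K l u"
proof -
  define f where "f = Fh K l u"
  have f1: "f \<ge> 1" unfolding f_def by (rule Fh_ge1)
  note i2 = inv_sq_integrable[of l u K]
  have "measure_pmf.expectation (PP l u) (\<lambda>x. 1 / Fh K (real (fst x)) (real (snd x)))
     \<le> measure_pmf.expectation (PP l u) (\<lambda>x. (f * (1 / (Fh K (real (fst x)) (real (snd x)))^2) + 1 / f) / 2)"
  proof (rule Bochner_Integration.integral_mono[OF inv_integrable])
    show "integrable (PP l u) (\<lambda>x. (f * (1 / (Fh K (real (fst x)) (real (snd x)))^2) + 1 / f) / 2)"
      by (rule Bochner_Integration.integrable_divide, rule Bochner_Integration.integrable_add,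
          rule Bochner_Integration.integrable_mult_right[OF i2]) simp
    fix x
    show "1 / Fh K (real (fst x)) (real (snd x)) \<le> (f * (1 / (Fh K (real (fst x)) (real (snd x)))^2) + 1 / f) / 2"
      using inv_amgm[of "Fh K (real (fst x)) (real (snd x))" f] Fh_ge1[of K "real (fst x)" "real (snd x)"] f1
      by simp
  qed
  also have "\<dots> = (f * measure_pmf.expectation (PP l u) (\<lambda>x. 1 / (Fh K (real (fst x)) (real (snd x)))^2) + 1 / f) / 2"
  proof -
    have a: "integrable (PP l u) (\<lambda>x. f * (1 / (Fh K (real (fst x)) (real (snd x)))^2))"
      by (rule Bochner_Integration.integrable_mult_right[OF i2])
    have "measure_pmf.expectation (PP l u) (\<lambda>x. (f * (1 / (Fh K (real (fst x)) (real (snd x)))^2) + 1 / f) / 2)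
      = measure_pmf.expectation (PP l u) (\<lambda>x. f * (1 / (Fh K (real (fst x)) (real (snd x)))^2) + 1 / f) / 2"
      by (rule Bochner_Integration.integral_divide_zero)
    also have "measure_pmf.expectation (PP l u) (\<lambda>x. f * (1 / (Fh K (real (fst x)) (real (snd x)))^2) + 1 / f)
      = measure_pmf.expectation (PP l u) (\<lambda>x. f * (1 / (Fh K (real (fst x)) (real (snd x)))^2)) + 1 / f"
      by (subst Bochner_Integration.integral_add[OF a]) auto
    also have "measure_pmf.expectation (PP l u) (\<lambda>x. f * (1 / (Fh K (real (fst x)) (real (snd x)))^2))
      = f * measure_pmf.expectation (PP l u) (\<lambda>x. 1 / (Fh K (real (fst x)) (real (snd x)))^2)"
      by (rule Bochner_Integration.integral_mult_right_zero)
    finally show ?thesis .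
  qed
  also have "\<dots> \<le> (f * (29 / f^2) + 1 / f) / 2"
    using FB2[OF K l u] f1 unfolding f_def[symmetric] by (intro divide_right_mono add_right_mono mult_left_mono) auto
  also have "\<dots> = 15 / f" using f1 by (simp add: power2_eq_square field_simps)
  finally show ?thesis unfolding f_def .
qed

lemma markov_pmf:
  fixes g :: "'a \<Rightarrow> real"
  assumes int: "integrable (measure_pmf M) g" and nn: "\<And>x. g x \<ge> 0" and c: "c > 0"
  shows "measure_pmf.prob M {x. g x > c} \<le> measure_pmf.expectation M g / c"
proof -
  have "measure_pmf.prob M {x. g x > c} \<le> measure_pmf.prob M {x \<in> space (measure_pmf M). g x \<ge> c}"
    by (intro measure_pmf.finite_measure_mono) auto
  also have "\<dots> \<le> measure_pmf.expectation M g / c"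
    by (rule integral_Markov_inequality_measure[OF int, where A=UNIV]) (use nn c in auto)
  finally show ?thesis .
qed

lemma PPi_sum_le:
  fixes g :: "nat \<Rightarrow> nat \<times> nat \<Rightarrow> real"
  assumes int: "\<And>i. i < n \<Longrightarrow> integrable (PP (m * p i) (m * q i)) (g i)"
    and le: "\<And>i. i < n \<Longrightarrow> measure_pmf.expectation (PP (m * p i) (m * q i)) (g i) \<le> b i"
  shows "integrable (PPi n m p q) (\<lambda>h. \<Sum>i<n. g i (h i))"
    and "measure_pmf.expectation (PPi n m p q) (\<lambda>h. \<Sum>i<n. g i (h i)) \<le> (\<Sum>i<n. b i)"
proof -
  show "integrable (PPi n m p q) (\<lambda>h. \<Sum>i<n. g i (h i))"
    by (rule PPi_sum(1)) (use int in auto)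
  have "measure_pmf.expectation (PPi n m p q) (\<lambda>h. \<Sum>i<n. g i (h i))
     = (\<Sum>i<n. measure_pmf.expectation (PP (m * p i) (m * q i)) (g i))"
    by (rule PPi_sum(2)) (use int in auto)
  also have "\<dots> \<le> (\<Sum>i<n. b i)" by (intro sum_mono le) auto
  finally show "measure_pmf.expectation (PPi n m p q) (\<lambda>h. \<Sum>i<n. g i (h i)) \<le> (\<Sum>i<n. b i)" .
qed

lemma Fh_le_sum: "l \<ge> 0 \<Longrightarrow> u \<ge> 0 \<Longrightarrow> K > 0 \<Longrightarrow> Fh K l u \<le> \<bar>l - u\<bar> / sqrt K + (l + u) / K + 1"
  unfolding Fh_def by (auto simp: max_def)

lemma sq_div_f: 
  assumes K: "K > 0"
  shows "(l - u)^2 / Fh K l u \<le> \<bar>l - u\<bar> * sqrt K"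
proof (cases "l = u")
  case True then show ?thesis by simp
next
  case False
  have sK: "sqrt K > 0" using K by simp
  have pos: "\<bar>l - u\<bar> / sqrt K > 0" using False sK by simp
  have "(l - u)^2 / Fh K l u \<le> (l - u)^2 / (\<bar>l - u\<bar> / sqrt K)"
  proof (rule divide_left_mono[OF Fh_geA])
    have "0 < Fh K l u" using Fh_ge1[of K l u] by simp
    thus "0 < Fh K l u * (\<bar>l - u\<bar> / sqrt K)" using pos by (rule mult_pos_pos)
  qed simp
  also have "\<dots> = \<bar>l - u\<bar> * sqrt K" using False sK
    by (simp add: power2_eq_square field_simps abs_mult_self_eq)
  finally show ?thesis .
qed

lemma V_div_f2:
  assumes K: "K > 0" and l: "l \<ge> 0" and u: "u \<ge> 0"
  shows "(2 * (l + u)^2 + 4 * (l - u)^2 * (l + u)) / (Fh K l u)^2 \<le> 2 * K^2 + 4 * (l + u) * K"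
proof -
  define f where "f = Fh K l u"
  have f1: "f \<ge> 1" unfolding f_def by (rule Fh_ge1)
  have sK: "sqrt K > 0" "(sqrt K)^2 = K" using K by auto
  have B: "(l + u) \<le> K * f" using Fh_geB[of l u K] K unfolding f_def by (simp add: field_simps)
  have B2: "(l + u)^2 \<le> K^2 * f^2" using B l u by (metis power_mono power_mult_distrib add_nonneg_nonneg)
  have A: "\<bar>l - u\<bar> \<le> sqrt K * f" using Fh_geA[of l u K] sK unfolding f_def by (simp add: field_simps)
  have A2: "(l - u)^2 \<le> K * f^2"
  proof -
    have "\<bar>l - u\<bar>^2 \<le> (sqrt K * f)^2" using A by (intro power_mono) auto
    thus ?thesis using sK by (simp add: power_mult_distrib)
  qed
  have "2 * (l + u)^2 + 4 * (l - u)^2 * (l + u) \<le> 2 * (K^2 * f^2) + 4 * (K * f^2) * (l + u)"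
    using B2 A2 l u by (intro add_mono mult_left_mono mult_right_mono) auto
  also have "\<dots> = (2 * K^2 + 4 * (l + u) * K) * f^2" by (simp add: algebra_simps)
  finally have "2 * (l + u)^2 + 4 * (l - u)^2 * (l + u) \<le> (2 * K^2 + 4 * (l + u) * K) * f^2" .
  thus ?thesis unfolding f_def[symmetric] using f1 by (simp add: divide_le_eq)
qed

definition Fx :: "real \<Rightarrow> (nat \<Rightarrow> nat \<times> nat) \<Rightarrow> nat \<Rightarrow> real" where
  "Fx K h i = Fh K (real (fst (h i))) (real (snd (h i)))"

definition Vv :: "real \<Rightarrow> real \<Rightarrow> real" where
  "Vv l u = 2 * (l + u)^2 + 4 * (l - u)^2 * (l + u)"

lemma main_prob:
  assumes n1: "1 \<le> n" and nm: "real n \<le> m" and dp: "is_distr n p" and dq: "is_distr n q"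
  shows "measure_pmf.prob (PPi n m p q)
     {h. (\<Sum>i<n. (m * p i - m * q i)^2 * (1 / Fx (m / real n) h i)) \<le> 450 * (sqrt (m / real n) * (m * l1dist n p q))
       \<and> (\<Sum>i<n. Vv (m * p i) (m * q i) * (1 / (Fx (m / real n) h i)^2)) \<le> 8700 * m^2 / real n
       \<and> (\<Sum>i<n. Fx (m / real n) h i) \<le> 120 * (m * l1dist n p q / sqrt (m / real n) + 3 * real n)} \<ge> 9/10"
proof -
  define K where "K = m / real n"
  define d where "d = l1dist n p q"
  define l where "l i = m * p i" for i
  define u where "u i = m * q i" for i
  have n0: "real n > 0" using n1 by simp
  have m0: "m > 0" using nm n0 by simp
  have K1: "K \<ge> 1" unfolding K_def using nm n0 by simp
  have K0: "K > 0" using K1 by simp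
  have sK: "sqrt K > 0" using K0 by simp
  have l0: "l i \<ge> 0" and u0: "u i \<ge> 0" if "i < n" for i
    using dp dq that m0 unfolding l_def u_def is_distr_def by auto
  have sumD: "(\<Sum>i<n. \<bar>l i - u i\<bar>) = m * d"
  proof -
    have "(\<Sum>i<n. \<bar>l i - u i\<bar>) = (\<Sum>i<n. m * \<bar>p i - q i\<bar>)"
      unfolding l_def u_def using m0 by (intro sum.cong refl) (simp add: right_diff_distrib[symmetric] abs_mult)
    thus ?thesis unfolding d_def l1dist_def by (simp add: sum_distrib_left)
  qed
  have sumS: "(\<Sum>i<n. l i + u i) = 2 * m"
    using dp dq unfolding l_def u_def is_distr_def by (simp add: sum.distrib sum_distrib_left[symmetric])
  have d0: "d \<ge> 0" unfolding d_def l1dist_def by (simp add: sum_nonneg)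
  define g1 where "g1 h = (\<Sum>i<n. (l i - u i)^2 * (1 / Fx K h i))" for h
  define g2 where "g2 h = (\<Sum>i<n. Vv (l i) (u i) * (1 / (Fx K h i)^2))" for h
  define g3 where "g3 h = (\<Sum>i<n. Fx K h i)" for h
  define f where "f i = Fh K (l i) (u i)" for i
  have f1: "f i \<ge> 1" for i unfolding f_def by (rule Fh_ge1)
  have Fx1: "Fx K h i \<ge> 1" for h i unfolding Fx_def by (rule Fh_ge1)
  have I1: "integrable (PPi n m p q) g1"
   and E1b: "measure_pmf.expectation (PPi n m p q) g1 \<le> (\<Sum>i<n. (l i - u i)^2 * (15 / f i))"
  proof -
    let ?g = "\<lambda>i x. (l i - u i)^2 * (1 / Fh K (real (fst x)) (real (snd x)))"
    have gi: "g1 = (\<lambda>h. \<Sum>i<n. ?g i (h i))" unfolding g1_def Fx_def by simp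
    have int: "integrable (PP (m * p i) (m * q i)) (?g i)" for i
      by (rule Bochner_Integration.integrable_mult_right[OF inv_integrable])
    have le: "measure_pmf.expectation (PP (m * p i) (m * q i)) (?g i) \<le> (l i - u i)^2 * (15 / f i)" if "i < n" for i
    proof -
      have "measure_pmf.expectation (PP (m * p i) (m * q i)) (?g i)
          = (l i - u i)^2 * measure_pmf.expectation (PP (l i) (u i)) (\<lambda>x. 1 / Fh K (real (fst x)) (real (snd x)))"
        unfolding l_def u_def by (rule Bochner_Integration.integral_mult_right_zero)
      also have "\<dots> \<le> (l i - u i)^2 * (15 / f i)"
        unfolding f_def by (intro mult_left_mono FB1 K1 l0 u0 that) auto
      finally show ?thesis .
    qed
    show "integrable (PPi n m p q) g1" unfolding gi by (rule PPi_sum_le(1)) (use int in auto)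
    show "measure_pmf.expectation (PPi n m p q) g1 \<le> (\<Sum>i<n. (l i - u i)^2 * (15 / f i))"
      unfolding gi by (rule PPi_sum_le(2)) (use int le in auto)
  qed
  have E1: "measure_pmf.expectation (PPi n m p q) g1 \<le> 15 * (sqrt K * (m * d))"
  proof -
    have "(\<Sum>i<n. (l i - u i)^2 * (15 / f i)) = 15 * (\<Sum>i<n. (l i - u i)^2 / f i)"
      by (simp add: sum_distrib_left mult.commute)
    also have "(\<Sum>i<n. (l i - u i)^2 / f i) \<le> (\<Sum>i<n. \<bar>l i - u i\<bar> * sqrt K)"
      unfolding f_def by (intro sum_mono sq_div_f K0)
    also have "\<dots> = sqrt K * (m * d)" by (simp only: sum_distrib_right[symmetric] sumD) (simp add: mult.commute)
    finally show ?thesis using E1b by linarith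
  qed
  have I2: "integrable (PPi n m p q) g2"
   and E2b: "measure_pmf.expectation (PPi n m p q) g2 \<le> (\<Sum>i<n. Vv (l i) (u i) * (29 / (f i)^2))"
  proof -
    let ?g = "\<lambda>i x. Vv (l i) (u i) * (1 / (Fh K (real (fst x)) (real (snd x)))^2)"
    have gi: "g2 = (\<lambda>h. \<Sum>i<n. ?g i (h i))" unfolding g2_def Fx_def by simp
    have int: "integrable (PP (m * p i) (m * q i)) (?g i)" for i
      by (rule Bochner_Integration.integrable_mult_right[OF inv_sq_integrable])
    have Vnn: "Vv (l i) (u i) \<ge> 0" if "i < n" for i
      unfolding Vv_def using l0[OF that] u0[OF that] by simp
    have le: "measure_pmf.expectation (PP (m * p i) (m * q i)) (?g i) \<le> Vv (l i) (u i) * (29 / (f i)^2)" if "i < n" for i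
    proof -
      have "measure_pmf.expectation (PP (m * p i) (m * q i)) (?g i)
          = Vv (l i) (u i) * measure_pmf.expectation (PP (l i) (u i)) (\<lambda>x. 1 / (Fh K (real (fst x)) (real (snd x)))^2)"
        unfolding l_def u_def by (rule Bochner_Integration.integral_mult_right_zero)
      also have "\<dots> \<le> Vv (l i) (u i) * (29 / (f i)^2)"
        unfolding f_def by (intro mult_left_mono FB2 K1 l0 u0 that Vnn)
      finally show ?thesis .
    qed
    show "integrable (PPi n m p q) g2" unfolding gi by (rule PPi_sum_le(1)) (use int in auto)
    show "measure_pmf.expectation (PPi n m p q) g2 \<le> (\<Sum>i<n. Vv (l i) (u i) * (29 / (f i)^2))"
      unfolding gi by (rule PPi_sum_le(2)) (use int le in auto)
  qed
  have E2: "measure_pmf.expectation (PPi n m p q) g2 \<le> 290 * m^2 / real n"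
  proof -
    have "(\<Sum>i<n. Vv (l i) (u i) * (29 / (f i)^2)) = 29 * (\<Sum>i<n. Vv (l i) (u i) / (f i)^2)"
      by (simp add: sum_distrib_left mult.commute)
    also have "(\<Sum>i<n. Vv (l i) (u i) / (f i)^2) \<le> (\<Sum>i<n. 2 * K^2 + 4 * (l i + u i) * K)"
      unfolding f_def Vv_def by (intro sum_mono V_div_f2 K0 l0 u0) auto
    also have "\<dots> = 2 * K^2 * real n + 4 * K * (2 * m)"
      using sumS by (simp add: sum.distrib sum_distrib_left[symmetric] sum_distrib_right[symmetric] mult.commute mult.left_commute)
    also have "\<dots> = 10 * m^2 / real n" unfolding K_def using n0 by (simp add: power2_eq_square field_simps)
    finally show ?thesis using E2b by linarith
  qed
  have I3: "integrable (PPi n m p q) g3"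
   and E3b: "measure_pmf.expectation (PPi n m p q) g3 \<le> (\<Sum>i<n. 4 * f i)"
  proof -
    let ?g = "\<lambda>i x. Fh K (real (fst x)) (real (snd x))"
    have gi: "g3 = (\<lambda>h. \<Sum>i<n. ?g i (h i))" unfolding g3_def Fx_def by simp
    have int: "integrable (PP (m * p i) (m * q i)) (?g i)" if "i < n" for i
      using FB3(1)[OF K1 l0[OF that] u0[OF that]] unfolding l_def u_def by simp
    have le: "measure_pmf.expectation (PP (m * p i) (m * q i)) (?g i) \<le> 4 * f i" if "i < n" for i
      using FB3(2)[OF K1 l0[OF that] u0[OF that]] unfolding l_def u_def f_def by simp
    show "integrable (PPi n m p q) g3" unfolding gi by (rule PPi_sum_le(1)) (use int in auto)
    show "measure_pmf.expectation (PPi n m p q) g3 \<le> (\<Sum>i<n. 4 * f i)"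
      unfolding gi by (rule PPi_sum_le(2)) (use int le in auto)
  qed
  have E3: "measure_pmf.expectation (PPi n m p q) g3 \<le> 4 * (m * d / sqrt K + 3 * real n)"
  proof -
    have a: "(\<Sum>i<n. f i) \<le> (\<Sum>i<n. \<bar>l i - u i\<bar> / sqrt K + (l i + u i) / K + 1)"
      unfolding f_def by (intro sum_mono Fh_le_sum l0 u0 K0) auto
    have b: "(\<Sum>i<n. \<bar>l i - u i\<bar> / sqrt K + (l i + u i) / K + 1) = m * d / sqrt K + 2 * m / K + real n"
      using sumD sumS by (simp add: sum.distrib sum_divide_distrib[symmetric])
    have c: "2 * m / K = 2 * real n" unfolding K_def using n0 m0 by simp
    have "measure_pmf.expectation (PPi n m p q) g3 \<le> (\<Sum>i<n. 4 * f i)" by (rule E3b)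
    also have "\<dots> = 4 * (\<Sum>i<n. f i)" by (simp add: sum_distrib_left)
    also have "\<dots> \<le> 4 * (\<Sum>i<n. \<bar>l i - u i\<bar> / sqrt K + (l i + u i) / K + 1)"
      using a by simp
    also have "\<dots> = 4 * (m * d / sqrt K + 3 * real n)" unfolding b c by simp
    finally show ?thesis .
  qed
  define T where "T = sqrt K * (m * d)"
  have T0: "T \<ge> 0" unfolding T_def using sK m0 d0 by simp
  have g1nn: "g1 h \<ge> 0" for h unfolding g1_def using Fx1 by (intro sum_nonneg) (simp add: order_trans[OF zero_le_one])
  have g2nn: "g2 h \<ge> 0" for h unfolding g2_def Vv_def using Fx1 l0 u0
    by (intro sum_nonneg mult_nonneg_nonneg) (auto simp: order_trans[OF zero_le_one])
  have g3nn: "g3 h \<ge> 0" for h unfolding g3_def using Fx1 by (intro sum_nonneg) (simp add: order_trans[OF zero_le_one])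
  have P1: "measure_pmf.prob (PPi n m p q) {h. g1 h > 450 * T} \<le> 1/30"
  proof (cases "T = 0")
    case True
    hence "d = 0" unfolding T_def using sK m0 by simp
    hence "\<forall>i<n. \<bar>l i - u i\<bar> = 0" using sumD by (simp add: sum_nonneg_eq_0_iff)
    hence "g1 h = 0" for h unfolding g1_def by simp
    hence "{h. g1 h > 450 * T} = {}" using True by simp
    thus ?thesis by simp
  next
    case False
    hence Tp: "T > 0" using T0 by simp
    have "measure_pmf.prob (PPi n m p q) {h. g1 h > 450 * T} \<le> measure_pmf.expectation (PPi n m p q) g1 / (450 * T)"
      by (rule markov_pmf[OF I1 g1nn]) (use Tp in simp)
    also have "\<dots> \<le> (15 * T) / (450 * T)" using E1 Tp unfolding T_def by (intro divide_right_mono) auto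
    also have "\<dots> = 1/30" using Tp by simp
    finally show ?thesis .
  qed
  have P2: "measure_pmf.prob (PPi n m p q) {h. g2 h > 8700 * m^2 / real n} \<le> 1/30"
  proof -
    have c: "8700 * m^2 / real n > 0" using m0 n0 by simp
    have "measure_pmf.prob (PPi n m p q) {h. g2 h > 8700 * m^2 / real n} \<le> measure_pmf.expectation (PPi n m p q) g2 / (8700 * m^2 / real n)"
      by (rule markov_pmf[OF I2 g2nn c])
    also have "\<dots> \<le> (290 * m^2 / real n) / (8700 * m^2 / real n)" using E2 c by (intro divide_right_mono) auto
    also have "\<dots> = 1/30" using m0 n0 by simp
    finally show ?thesis .
  qed
  have P3: "measure_pmf.prob (PPi n m p q) {h. g3 h > 120 * (m * d / sqrt K + 3 * real n)} \<le> 1/30"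
  proof -
    have W0: "m * d / sqrt K + 3 * real n > 0" using m0 d0 sK n0 by (simp add: add_nonneg_pos)
    have c: "120 * (m * d / sqrt K + 3 * real n) > 0" using W0 by simp
    have "measure_pmf.prob (PPi n m p q) {h. g3 h > 120 * (m * d / sqrt K + 3 * real n)} \<le> measure_pmf.expectation (PPi n m p q) g3 / (120 * (m * d / sqrt K + 3 * real n))"
      by (rule markov_pmf[OF I3 g3nn c])
    also have "\<dots> \<le> (4 * (m * d / sqrt K + 3 * real n)) / (120 * (m * d / sqrt K + 3 * real n))" using E3 c by (intro divide_right_mono) auto
    also have "\<dots> = 1/30" using W0 by simp
    finally show ?thesis .
  qed
  define B where "B = {h. g1 h > 450 * T} \<union> {h. g2 h > 8700 * m^2 / real n} \<union> {h. g3 h > 120 * (m * d / sqrt K + 3 * real n)}"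
  have PB: "measure_pmf.prob (PPi n m p q) B \<le> 1/10"
  proof -
    have "measure_pmf.prob (PPi n m p q) B \<le> measure_pmf.prob (PPi n m p q) ({h. g1 h > 450 * T} \<union> {h. g2 h > 8700 * m^2 / real n}) + measure_pmf.prob (PPi n m p q) {h. g3 h > 120 * (m * d / sqrt K + 3 * real n)}"
      unfolding B_def by (rule measure_subadditive) (auto simp: measure_pmf.emeasure_eq_measure)
    also have "measure_pmf.prob (PPi n m p q) ({h. g1 h > 450 * T} \<union> {h. g2 h > 8700 * m^2 / real n}) \<le> measure_pmf.prob (PPi n m p q) {h. g1 h > 450 * T} + measure_pmf.prob (PPi n m p q) {h. g2 h > 8700 * m^2 / real n}"
      by (rule measure_subadditive) (auto simp: measure_pmf.emeasure_eq_measure)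
    finally show ?thesis using P1 P2 P3 by linarith
  qed
  have "measure_pmf.prob (PPi n m p q) (UNIV - B) = 1 - measure_pmf.prob (PPi n m p q) B"
    using measure_pmf.prob_compl[of B "PPi n m p q"] by simp
  also have "UNIV - B = {h. g1 h \<le> 450 * T \<and> g2 h \<le> 8700 * m^2 / real n \<and> g3 h \<le> 120 * (m * d / sqrt K + 3 * real n)}"
    unfolding B_def by auto
  finally have "measure_pmf.prob (PPi n m p q) {h. g1 h \<le> 450 * T \<and> g2 h \<le> 8700 * m^2 / real n \<and> g3 h \<le> 120 * (m * d / sqrt K + 3 * real n)} \<ge> 9/10"
    using PB by linarith
  thus ?thesis unfolding g1_def g2_def g3_def T_def K_def d_def l_def u_def .
qed

lemma CS_weighted:
  fixes a F :: "nat \<Rightarrow> real"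
  assumes "\<And>i. i \<in> I \<Longrightarrow> F i > 0"
  shows "(\<Sum>i\<in>I. \<bar>a i\<bar>)^2 \<le> (\<Sum>i\<in>I. (a i)^2 / F i) * (\<Sum>i\<in>I. F i)"
proof -
  have "(\<Sum>i\<in>I. (\<bar>a i\<bar> / sqrt (F i)) * sqrt (F i))^2 \<le> (\<Sum>i\<in>I. (\<bar>a i\<bar> / sqrt (F i))^2) * (\<Sum>i\<in>I. (sqrt (F i))^2)"
    by (rule Cauchy_Schwarz_ineq_sum)
  moreover have "(\<Sum>i\<in>I. (\<bar>a i\<bar> / sqrt (F i)) * sqrt (F i)) = (\<Sum>i\<in>I. \<bar>a i\<bar>)"
  proof (intro sum.cong refl)
    fix i assume "i \<in> I"
    with assms have "F i > 0" by auto
    thus "(\<bar>a i\<bar> / sqrt (F i)) * sqrt (F i) = \<bar>a i\<bar>" by simp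
  qed
  moreover have "(\<Sum>i\<in>I. (\<bar>a i\<bar> / sqrt (F i))^2) = (\<Sum>i\<in>I. (a i)^2 / F i)"
  proof (intro sum.cong refl)
    fix i assume "i \<in> I"
    with assms have "F i > 0" by auto
    thus "(\<bar>a i\<bar> / sqrt (F i))^2 = (a i)^2 / F i" by (simp add: power_divide)
  qed
  moreover have "(\<Sum>i\<in>I. (sqrt (F i))^2) = (\<Sum>i\<in>I. F i)"
  proof (intro sum.cong refl)
    fix i assume "i \<in> I"
    with assms have "F i > 0" by auto
    thus "(sqrt (F i))^2 = F i" by simp
  qed
  ultimately show ?thesis by simp
qed

lemma lower_alg:
  fixes M W S1 S3 N sK :: real
  assumes N: "N > 0" and sK: "sK > 0" and M0: "M \<ge> 0" and W: "W = M / sK"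
    and S1: "S1 \<ge> 0" and S3: "S3 > 0" and CS: "M^2 \<le> S1 * S3" and S3le: "S3 \<le> 120 * (W + 3 * N)"
  shows "1/480 * min (sK * M) (M^2 / N) \<le> S1"
proof (cases "M = 0")
  case True
  then show ?thesis using S1 by simp
next
  case False
  hence Mp: "M > 0" using M0 by simp
  have Wp: "W > 0" using W Mp sK by simp
  have a: "M^2 / S3 \<le> S1" using CS S3 by (simp add: divide_le_eq)
  have b: "M^2 / (120 * (W + 3 * N)) \<le> M^2 / S3"
    using S3le S3 Mp by (intro divide_left_mono) auto
  show ?thesis
  proof (cases "W \<ge> N")
    case True
    have "M^2 / (480 * W) \<le> M^2 / (120 * (W + 3 * N))"
      using True Wp N Mp by (intro divide_left_mono) auto
    moreover have "M^2 / (480 * W) = 1/480 * (sK * M)" unfolding W using sK Mp by (simp add: power2_eq_square field_simps)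
    moreover have "1/480 * min (sK * M) (M^2 / N) \<le> 1/480 * (sK * M)" by simp
    ultimately show ?thesis using a b by linarith
  next
    case False
    have "M^2 / (480 * N) \<le> M^2 / (120 * (W + 3 * N))"
      using False Wp N Mp by (intro divide_left_mono) auto
    moreover have "M^2 / (480 * N) = 1/480 * (M^2 / N)" by simp
    moreover have "1/480 * min (sK * M) (M^2 / N) \<le> 1/480 * (M^2 / N)" by simp
    ultimately show ?thesis using a b by linarith
  qed
qed

lemma core:
  fixes n :: nat and m :: real and p q :: "nat \<Rightarrow> real"
  assumes n1: "1 \<le> n" and nm: "real n \<le> m" and dp: "is_distr n p" and dq: "is_distr n q"
  shows "measure_pmf.prob (pair_pmf (counts n m p) (counts n m q))
        {(tX, tY). let fh = (\<lambda>i. fhat n m (tX i) (tY i));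
                       D = Zcond n m p q fh;
                       d = l1dist n p q
                   in 1/480 * min (m powr (3/2) * d / sqrt (real n)) (m^2 * d^2 / real n)
                        \<le> measure_pmf.expectation D (\<lambda>z. z)
                    \<and> measure_pmf.expectation D (\<lambda>z. z) \<le> 450 * (m powr (3/2) * d / sqrt (real n))
                    \<and> measure_pmf.variance D (\<lambda>z. z) \<le> 8700 * m^2 / real n}
      \<ge> 9/10"
proof -
  define K where "K = m / real n"
  define d where "d = l1dist n p q"
  define G where "G h = ((\<lambda>i. fst (h i)), (\<lambda>i. snd (h i)))" for h :: "nat \<Rightarrow> nat \<times> nat"
  define S where "S = {(tX, tY). let fh = (\<lambda>i. fhat n m (tX i) (tY i));
                       D = Zcond n m p q fh;
                       d = l1dist n p q
                   in 1/480 * min (m powr (3/2) * d / sqrt (real n)) (m^2 * d^2 / real n)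
                        \<le> measure_pmf.expectation D (\<lambda>z. z)
                    \<and> measure_pmf.expectation D (\<lambda>z. z) \<le> 450 * (m powr (3/2) * d / sqrt (real n))
                    \<and> measure_pmf.variance D (\<lambda>z. z) \<le> 8700 * m^2 / real n}"
  define Good where "Good = {h. (\<Sum>i<n. (m * p i - m * q i)^2 * (1 / Fx K h i)) \<le> 450 * (sqrt K * (m * d))
       \<and> (\<Sum>i<n. Vv (m * p i) (m * q i) * (1 / (Fx K h i)^2)) \<le> 8700 * m^2 / real n
       \<and> (\<Sum>i<n. Fx K h i) \<le> 120 * (m * d / sqrt K + 3 * real n)}"
  have n0: "real n > 0" using n1 by simp
  have m0: "m > 0" using nm n0 by simp
  have K0: "K > 0" unfolding K_def using m0 n0 by simp
  have sK: "sqrt K > 0" using K0 by simp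
  have d0: "d \<ge> 0" unfolding d_def l1dist_def by (simp add: sum_nonneg)
  have nn: "\<And>i. i < n \<Longrightarrow> 0 \<le> m * p i \<and> 0 \<le> m * q i"
    using dp dq m0 unfolding is_distr_def by auto
  have Tid: "m powr (3/2) * d / sqrt (real n) = sqrt K * (m * d)"
  proof -
    have "m powr (3/2) = m powr (1 + 1/2)" by simp
    also have "\<dots> = m powr 1 * m powr (1/2)" by (rule powr_add)
    also have "\<dots> = m * sqrt m" using m0 by (simp add: powr_half_sqrt)
    finally have "m powr (3/2) = m * sqrt m" .
    thus ?thesis unfolding K_def using n0 by (simp add: real_sqrt_divide)
  qed
  have sumD: "(\<Sum>i<n. \<bar>m * p i - m * q i\<bar>) = m * d"
  proof -
    have "(\<Sum>i<n. \<bar>m * p i - m * q i\<bar>) = (\<Sum>i<n. m * \<bar>p i - q i\<bar>)"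
      using m0 by (intro sum.cong refl) (simp add: right_diff_distrib[symmetric] abs_mult)
    thus ?thesis unfolding d_def l1dist_def by (simp add: sum_distrib_left)
  qed
  have fhx: "fhat n m (fst (h i)) (snd (h i)) = Fx K h i" for h i
    unfolding fhat_def Fx_def Fh_def K_def using nm by simp
  have sub: "Good \<subseteq> G -` S"
  proof
    fix h assume hG: "h \<in> Good"
    define fh where "fh i = fhat n m (fst (h i)) (snd (h i))" for i
    have fh: "fh = Fx K h" unfolding fh_def using fhx by auto
    have F1: "Fx K h i \<ge> 1" for i unfolding Fx_def by (rule Fh_ge1)
    have mean: "measure_pmf.expectation (Zcond n m p q fh) (\<lambda>z. z) = (\<Sum>i<n. (m * p i - m * q i)^2 * (1 / Fx K h i))"
      using Zcond_mean(2)[OF nn, where fh=fh] unfolding fh by simp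
    have var: "measure_pmf.variance (Zcond n m p q fh) (\<lambda>z. z) = (\<Sum>i<n. Vv (m * p i) (m * q i) * (1 / (Fx K h i)^2))"
      using Zcond_var[OF nn, where fh=fh] unfolding fh Vv_def by simp
    have g1: "(\<Sum>i<n. (m * p i - m * q i)^2 * (1 / Fx K h i)) \<le> 450 * (sqrt K * (m * d))"
     and g2: "(\<Sum>i<n. Vv (m * p i) (m * q i) * (1 / (Fx K h i)^2)) \<le> 8700 * m^2 / real n"
     and g3: "(\<Sum>i<n. Fx K h i) \<le> 120 * (m * d / sqrt K + 3 * real n)"
      using hG unfolding Good_def by auto
    have S1: "(\<Sum>i<n. (m * p i - m * q i)^2 * (1 / Fx K h i)) = (\<Sum>i<n. (m * p i - m * q i)^2 / Fx K h i)"
      by simp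
    have S1nn: "(\<Sum>i<n. (m * p i - m * q i)^2 / Fx K h i) \<ge> 0"
      using F1 by (intro sum_nonneg divide_nonneg_nonneg) (auto intro: order_trans[OF zero_le_one])
    have S3p: "(\<Sum>i<n. Fx K h i) > 0"
    proof -
      have "(\<Sum>i<n. Fx K h i) \<ge> (\<Sum>i<n. (1::real))" using F1 by (intro sum_mono) auto
      thus ?thesis using n0 by simp
    qed
    have CS: "(m * d)^2 \<le> (\<Sum>i<n. (m * p i - m * q i)^2 / Fx K h i) * (\<Sum>i<n. Fx K h i)"
      using CS_weighted[of "{..<n}" "Fx K h" "\<lambda>i. m * p i - m * q i"] F1 sumD
      by (simp add: order_less_le_trans[OF zero_less_one])
    have low: "1/480 * min (sqrt K * (m * d)) ((m * d)^2 / real n) \<le> (\<Sum>i<n. (m * p i - m * q i)^2 / Fx K h i)"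
      by (rule lower_alg[OF n0 sK _ refl S1nn S3p CS g3]) (use m0 d0 in simp)
    have e: "(m * d)^2 / real n = m^2 * d^2 / real n" by (simp add: power_mult_distrib)
    have c1: "1/480 * min (m powr (3/2) * l1dist n p q / sqrt (real n)) (m^2 * (l1dist n p q)^2 / real n)
        \<le> measure_pmf.expectation (Zcond n m p q fh) (\<lambda>z. z)"
      using low unfolding mean S1 d_def[symmetric] Tid e[symmetric] .
    have c2: "measure_pmf.expectation (Zcond n m p q fh) (\<lambda>z. z) \<le> 450 * (m powr (3/2) * l1dist n p q / sqrt (real n))"
      using g1 unfolding mean d_def[symmetric] Tid .
    have c3: "measure_pmf.variance (Zcond n m p q fh) (\<lambda>z. z) \<le> 8700 * m^2 / real n"
      using g2 unfolding var .
    have "let fh = fh; D = Zcond n m p q fh; d = l1dist n p q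
                   in 1/480 * min (m powr (3/2) * d / sqrt (real n)) (m^2 * d^2 / real n)
                        \<le> measure_pmf.expectation D (\<lambda>z. z)
                    \<and> measure_pmf.expectation D (\<lambda>z. z) \<le> 450 * (m powr (3/2) * d / sqrt (real n))
                    \<and> measure_pmf.variance D (\<lambda>z. z) \<le> 8700 * m^2 / real n"
      unfolding Let_def using c1 c2 c3 by blast
    thus "h \<in> G -` S" unfolding S_def G_def fh_def by simp
  qed
  have "9/10 \<le> measure_pmf.prob (PPi n m p q) Good"
    using main_prob[OF n1 nm dp dq] unfolding Good_def K_def d_def .
  also have "\<dots> \<le> measure_pmf.prob (PPi n m p q) (G -` S)"
    by (rule measure_pmf.finite_measure_mono[OF sub]) simp
  also have "\<dots> = measure_pmf.prob (pair_pmf (counts n m p) (counts n m q)) S"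
    unfolding counts_pair G_def by (simp add: measure_map_pmf)
  finally show ?thesis unfolding S_def .
qed

theorem lemma2p3:
  shows "\<exists>c1 c2 c3 :: real. c1 > 0 \<and> c2 > 0 \<and> c3 > 0 \<and>
    (\<forall>(n::nat) (m::real) p q. 1 \<le> n \<longrightarrow> real n \<le> m \<longrightarrow> is_distr n p \<longrightarrow> is_distr n q \<longrightarrow>
      measure_pmf.prob (pair_pmf (counts n m p) (counts n m q))
        {(tX, tY). let fh = (\<lambda>i. fhat n m (tX i) (tY i));
                       D = Zcond n m p q fh;
                       d = l1dist n p q
                   in c1 * min (m powr (3/2) * d / sqrt (real n)) (m^2 * d^2 / real n)
                        \<le> measure_pmf.expectation D (\<lambda>z. z)
                    \<and> measure_pmf.expectation D (\<lambda>z. z) \<le> c2 * (m powr (3/2) * d / sqrt (real n))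
                    \<and> measure_pmf.variance D (\<lambda>z. z) \<le> c3 * m^2 / real n}
      \<ge> 9/10)"
  apply (rule exI[of _ "1/480"], rule exI[of _ 450], rule exI[of _ 8700])
  using core by simp

end
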